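(* Fix constants $0<\gamma_0\le 1$ and $\mu_0>0$. For each integer $t\ge 1$, let $X_1,\dots,X_t$ be independent random variables with $0\le X_j\le 1$, and suppose there are deterministic integers $M=M(t)$ and $1=s_1<s_2<\cdots<s_M=t$ and numbers $m(1),\dots,m(M-1)$ such that $\mathbb{E}X_j=m(k)$ for each $s_k\le j<s_{k+1}$ and $1\le k\le M-1$, and such that $$\min_{k}(s_{k+1}-s_k)\ge t^{\gamma_0}\quad\text{and}\quad \min_k m(k)\ge \mu_0 .$$ Let $0<\beta<\gamma<\gamma_0$ and $0<\delta<\frac{\gamma-\beta}{1-\beta}$. Let $Z_1,\dots,Z_t$ be independent Bernoulli random variables, independent of $(X_j)$, with $\mathbb{P}(Z_j=1)=j^{-\beta}=1-\mathbb{P}(Z_j=0)$. Let $\mathcal{E}(t)=\{1\le j\le t: Z_j=1\}$ and let $T(1)<T(2)<\cdots<T(w)$ be its elements. For $l\ge1$ let $\alpha_l=1-l^{-\delta}$, set $Y_0=0$ and define recursively $Y_l=\alpha_lY_{l-1}+(1-\alpha_l)X_{T(l)}$ for $1\le l\le w$. Then there are constants $b,\theta>0$ (not depending on $t$) such that, for all sufficiently large $t$, $$\mathbb{P}(E_{good})\ge 1-\exp(-t^{\theta}),$$ where $E_{good}$ is the event that both (i) $\#\mathcal{E}(t)\le \frac{4t^{1-\beta}}{1-\beta}$, and (ii) $|Y_l-m(k)|\le \frac{m(k)}{t^{b}}$ for every $1\le k\le M-1$ and every $l$ with $s_k+t^{\gamma}\le T(l)<s_{k+1}$.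
   Context: The intervals $s_k\le j<s_{k+1}$ are called epochs and the $s_k$ transition times; the sequence $(X_j)$ is piecewise stationary in mean. $\#A$ denotes the cardinality of a set $A$. The constants $\gamma_0,\mu_0,\beta,\gamma,\delta$ are fixed independently of $t$, while the sequences, $M$, the $s_k$ and the $m(k)$ may depend on $t$. *)

theory Defs
  imports "HOL-Probability.Probability"
begin

definition alpha :: "real \<Rightarrow> nat \<Rightarrow> real" where
  "alpha \<delta> l = 1 - real l powr (- \<delta>)"

text \<open>Y_0 = 0, Y_l = alpha_l Y_(l-1) + (1 - alpha_l) x_l, where x_l plays the role of X_(T(l)).\<close>
fun Yrec :: "real \<Rightarrow> (nat \<Rightarrow> real) \<Rightarrow> nat \<Rightarrow> real" where
  "Yrec \<delta> x 0 = 0"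
| "Yrec \<delta> x (Suc l) = alpha \<delta> (Suc l) * Yrec \<delta> x l + (1 - alpha \<delta> (Suc l)) * x (Suc l)"

definition arrival_set :: "nat \<Rightarrow> (nat \<Rightarrow> real) \<Rightarrow> nat set" where
  "arrival_set t z = {j \<in> {1..t}. z j = 1}"

definition arrival_time :: "nat \<Rightarrow> (nat \<Rightarrow> real) \<Rightarrow> nat \<Rightarrow> nat" where
  "arrival_time t z l = sorted_list_of_set (arrival_set t z) ! (l - 1)"

definition E_good ::
  "real \<Rightarrow> real \<Rightarrow> real \<Rightarrow> real \<Rightarrow> nat \<Rightarrow> nat \<Rightarrow> (nat \<Rightarrow> nat) \<Rightarrow> (nat \<Rightarrow> real)
   \<Rightarrow> (nat \<Rightarrow> real) \<Rightarrow> (nat \<Rightarrow> real) \<Rightarrow> bool" where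
  "E_good \<beta> \<gamma> \<delta> b t M s m x z \<longleftrightarrow>
     real (card (arrival_set t z)) \<le> 4 * real t powr (1 - \<beta>) / (1 - \<beta>) \<and>
     (\<forall>k \<in> {1..M-1}. \<forall>l \<in> {1..card (arrival_set t z)}.
        real (s k) + real t powr \<gamma> \<le> real (arrival_time t z l) \<and> arrival_time t z l < s (Suc k)
        \<longrightarrow> \<bar>Yrec \<delta> (\<lambda>i. x (arrival_time t z i)) l - m k\<bar> \<le> m k / real t powr b)"

end

theory Submission
  imports Defs "HOL-Real_Asymp.Real_Asymp"
begin

definition Wt :: "real \<Rightarrow> nat \<Rightarrow> nat \<Rightarrow> real" where
  "Wt \<delta> l i = (1 - alpha \<delta> i) * (\<Prod>r\<in>{i<..l}. alpha \<delta> r)"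

lemma Wt_Suc: "i \<le> l \<Longrightarrow> Wt \<delta> (Suc l) i = alpha \<delta> (Suc l) * Wt \<delta> l i"
proof -
  assume "i \<le> l"
  then have "{i<..Suc l} = insert (Suc l) {i<..l}" by auto
  then show ?thesis unfolding Wt_def by simp
qed

lemma Wt_same: "Wt \<delta> l l = 1 - alpha \<delta> l"
  unfolding Wt_def by simp

lemma Yrec_sum: "Yrec \<delta> x l = (\<Sum>i\<in>{1..l}. Wt \<delta> l i * x i)"
proof (induction l)
  case 0
  then show ?case by simp
next
  case (Suc l)
  have "(\<Sum>i\<in>{1..Suc l}. Wt \<delta> (Suc l) i * x i)
      = (\<Sum>i\<in>{1..l}. Wt \<delta> (Suc l) i * x i) + Wt \<delta> (Suc l) (Suc l) * x (Suc l)"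
    by simp
  also have "(\<Sum>i\<in>{1..l}. Wt \<delta> (Suc l) i * x i) = alpha \<delta> (Suc l) * (\<Sum>i\<in>{1..l}. Wt \<delta> l i * x i)"
    by (simp add: sum_distrib_left Wt_Suc mult.assoc)
  finally show ?case using Suc by (simp add: Wt_same)
qed

lemma Wsum: "1 \<le> a \<Longrightarrow> a \<le> Suc l \<Longrightarrow> (\<Sum>i\<in>{a..l}. Wt \<delta> l i) = 1 - (\<Prod>r\<in>{a..l}. alpha \<delta> r)"
proof (induction l)
  case 0
  then show ?case by simp
next
  case (Suc l)
  show ?case
  proof (cases "a = Suc (Suc l)")
    case True
    then show ?thesis by simp
  next
    case False
    then have a: "a \<le> Suc l" using Suc by simp
    have "(\<Sum>i\<in>{a..Suc l}. Wt \<delta> (Suc l) i) = (\<Sum>i\<in>{a..l}. Wt \<delta> (Suc l) i) + Wt \<delta> (Suc l) (Suc l)"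
      using a by (simp add: sum.atLeast_Suc_atMost_Suc_shift)
    also have "(\<Sum>i\<in>{a..l}. Wt \<delta> (Suc l) i) = alpha \<delta> (Suc l) * (\<Sum>i\<in>{a..l}. Wt \<delta> l i)"
      by (simp add: sum_distrib_left Wt_Suc)
    also have "\<dots> = alpha \<delta> (Suc l) * (1 - (\<Prod>r\<in>{a..l}. alpha \<delta> r))"
      using Suc a by simp
    also have "(\<Prod>r\<in>{a..Suc l}. alpha \<delta> r) = alpha \<delta> (Suc l) * (\<Prod>r\<in>{a..l}. alpha \<delta> r)"
      using a by (simp add: atLeastAtMostSuc_conv)
    ultimately show ?thesis by (simp add: Wt_same algebra_simps)
  qed
qed

lemma alpha_1: "alpha \<delta> 1 = 0" by (simp add: alpha_def)

lemma Wsum1: "1 \<le> l \<Longrightarrow> (\<Sum>i\<in>{1..l}. Wt \<delta> l i) = 1"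
proof -
  assume l: "1 \<le> l"
  have "(\<Prod>r\<in>{1..l}. alpha \<delta> r) = 0"
    using l by (intro prod_zero) (auto intro!: bexI[of _ 1] simp: alpha_def)
  then show ?thesis using Wsum[of 1 l \<delta>] l by simp
qed

lemma alpha_bounds: "0 < \<delta> \<Longrightarrow> 1 \<le> r \<Longrightarrow> 0 \<le> alpha \<delta> r \<and> alpha \<delta> r < 1"
proof -
  assume a: "0 < \<delta>" "1 \<le> r"
  have "1 \<le> real r powr \<delta>" using a by (intro ge_one_powr_ge_zero) auto
  then have "real r powr (-\<delta>) \<le> 1" "0 < real r powr (-\<delta>)" using a
    by (auto simp: powr_minus field_simps)
  then show ?thesis unfolding alpha_def by auto
qed



definition Tp :: "nat set \<Rightarrow> nat \<Rightarrow> nat" where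
  "Tp A l = sorted_list_of_set A ! (l - 1)"

lemma arrival_time_Tp: "arrival_time t z = Tp (arrival_set t z)"
  by (simp add: arrival_time_def Tp_def fun_eq_iff)

lemma arrival_set_sub: "arrival_set t z \<subseteq> {1..t}"
  by (auto simp: arrival_set_def)

lemma arrival_set_finite: "finite (arrival_set t z)"
  using arrival_set_sub finite_subset by blast

lemma Tp_in: "finite A \<Longrightarrow> 1 \<le> i \<Longrightarrow> i \<le> card A \<Longrightarrow> Tp A i \<in> A"
  unfolding Tp_def
  by (metis diff_less less_le_trans less_numeral_extra(1) nth_mem sorted_list_of_set.length_sorted_key_list_of_set
      sorted_list_of_set.set_sorted_key_list_of_set)

lemma Tp_mono: "finite A \<Longrightarrow> 1 \<le> i \<Longrightarrow> i < i' \<Longrightarrow> i' \<le> card A \<Longrightarrow> Tp A i < Tp A i'"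
proof -
  assume a: "finite A" "1 \<le> i" "i < i'" "i' \<le> card A"
  have s: "sorted_wrt (<) (sorted_list_of_set A)"
    using a(1) by (simp add: strict_sorted_list_of_set)
  show ?thesis unfolding Tp_def
    using a by (intro sorted_wrt_nth_less[OF s]) auto
qed

lemma Tp_cnt: "finite A \<Longrightarrow> 1 \<le> i \<Longrightarrow> i \<le> card A \<Longrightarrow> card {j\<in>A. j < Tp A i} = i - 1"
proof -
  assume a: "finite A" "1 \<le> i" "i \<le> card A"
  define xs where "xs = sorted_list_of_set A"
  have s: "sorted_wrt (<) xs" using a(1) by (simp add: strict_sorted_list_of_set xs_def)
  have sA: "set xs = A" "length xs = card A" "distinct xs" using a(1) by (auto simp: xs_def)
  have eq: "{j\<in>A. j < Tp A i} = (\<lambda>q. xs ! q) ` {..<i-1}"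
  proof safe
    fix j assume j: "j \<in> A" "j < Tp A i"
    then obtain q where q: "q < length xs" "xs ! q = j" using sA by (metis in_set_conv_nth)
    have "q < i - 1"
    proof (rule ccontr)
      assume "\<not> q < i - 1"
      then have "i - 1 \<le> q" by simp
      then have "xs ! (i-1) \<le> xs ! q"
        using s q by (metis le_eq_less_or_eq sorted_wrt_nth_less order.strict_implies_order)
      then show False using j q unfolding Tp_def xs_def by simp
    qed
    then show "j \<in> (\<lambda>q. xs ! q) ` {..<i-1}" using q by auto
  next
    fix q assume q: "q < i - 1"
    show "xs ! q \<in> A" using q a sA by auto
    show "xs ! q < Tp A i" unfolding Tp_def xs_def[symmetric]
      using q a sA by (intro sorted_wrt_nth_less[OF s]) auto
  qed
  have "inj_on (\<lambda>q. xs ! q) {..<i-1}"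
    using sA a by (intro inj_onI) (auto simp: nth_eq_iff_index_eq)
  then show ?thesis using eq card_image by fastforce
qed

lemma Tp_ge_iff: "finite A \<Longrightarrow> 1 \<le> i \<Longrightarrow> i \<le> card A \<Longrightarrow> (a \<le> Tp A i) \<longleftrightarrow> card {j\<in>A. j < a} < i"
proof -
  assume a: "finite A" "1 \<le> i" "i \<le> card A"
  show ?thesis
  proof
    assume h: "a \<le> Tp A i"
    have "card {j\<in>A. j < a} \<le> card {j\<in>A. j < Tp A i}"
      using h a by (intro card_mono) auto
    then show "card {j\<in>A. j < a} < i" using Tp_cnt[OF a] a by simp
  next
    assume h: "card {j\<in>A. j < a} < i"
    show "a \<le> Tp A i"
    proof (rule ccontr)
      assume "\<not> a \<le> Tp A i"
      then have "insert (Tp A i) {j\<in>A. j < Tp A i} \<subseteq> {j\<in>A. j < a}"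
        using Tp_in[OF a] by auto
      then have "card (insert (Tp A i) {j\<in>A. j < Tp A i}) \<le> card {j\<in>A. j < a}"
        using a by (intro card_mono) auto
      then show False using Tp_cnt[OF a] a h by simp
    qed
  qed
qed



lemma Wt_nonneg: "0 < \<delta> \<Longrightarrow> 1 \<le> i \<Longrightarrow> 0 \<le> Wt \<delta> l i"
  unfolding Wt_def using alpha_bounds
  by (intro mult_nonneg_nonneg prod_nonneg) (auto, metis less_imp_le_nat order.strict_trans1 less_eq_real_def alpha_bounds le_less_trans)

lemma prod_alpha_bound:
  assumes "0 < \<delta>" "finite S" "S \<subseteq> {1..w}"
  shows "(\<Prod>r\<in>S. alpha \<delta> r) \<le> exp (- real (card S) * real w powr (-\<delta>))"
proof -
  have "(\<Prod>r\<in>S. alpha \<delta> r) \<le> (\<Prod>r\<in>S. exp (- (real w powr (-\<delta>))))"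
  proof (rule prod_mono)
    fix r assume r: "r \<in> S"
    then have r1: "1 \<le> r" "r \<le> w" using assms by auto
    have "real w powr (-\<delta>) \<le> real r powr (-\<delta>)"
      using r1 assms by (intro powr_mono2') auto
    then have "alpha \<delta> r \<le> 1 - (real w powr (-\<delta>))" unfolding alpha_def by simp
    also have "\<dots> \<le> exp (- (real w powr (-\<delta>)))"
      using exp_ge_add_one_self[of "- (real w powr (-\<delta>))"] by simp
    finally show "0 \<le> alpha \<delta> r \<and> alpha \<delta> r \<le> exp (- (real w powr (-\<delta>)))"
      using alpha_bounds[OF assms(1) r1(1)] by simp
  qed
  also have "\<dots> = exp (- real (card S) * real w powr (-\<delta>))"
    by (simp add: exp_of_nat_mult[symmetric] mult.commute)
  finally show ?thesis .
qed

lemma prod_alpha_le1: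
  assumes "0 < \<delta>" "\<forall>r\<in>S. 1 \<le> r"
  shows "(\<Prod>r\<in>S. alpha \<delta> r) \<le> 1" "0 \<le> (\<Prod>r\<in>S. alpha \<delta> r)"
  using assms alpha_bounds
  by (auto intro!: prod_le_1 prod_nonneg simp: less_imp_le)

lemma Wt_le_pow: "0 < \<delta> \<Longrightarrow> 1 \<le> i \<Longrightarrow> Wt \<delta> l i \<le> real i powr (-\<delta>)"
proof -
  assume a: "0 < \<delta>" "1 \<le> i"
  have "(\<Prod>r\<in>{i<..l}. alpha \<delta> r) \<le> 1" using a by (intro prod_alpha_le1) auto
  moreover have "0 \<le> real i powr (-\<delta>)" by simp
  ultimately show ?thesis unfolding Wt_def alpha_def
    by (simp add: mult_left_le)
qed

lemma Wt_le_exp: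
  assumes "0 < \<delta>" "1 \<le> i" "l \<le> w"
  shows "Wt \<delta> l i \<le> exp (- real (l - i) * real w powr (-\<delta>))"
proof -
  have "(\<Prod>r\<in>{i<..l}. alpha \<delta> r) \<le> exp (- real (card {i<..l}) * real w powr (-\<delta>))"
    using assms by (intro prod_alpha_bound) auto
  moreover have "0 \<le> (\<Prod>r\<in>{i<..l}. alpha \<delta> r)" using assms by (intro prod_alpha_le1) auto
  moreover have "real i powr (-\<delta>) \<le> 1" "0 \<le> real i powr (-\<delta>)" using assms
    by (auto simp: powr_minus field_simps intro: ge_one_powr_ge_zero)
  ultimately have "Wt \<delta> l i \<le> 1 * exp (- real (card {i<..l}) * real w powr (-\<delta>))"
    unfolding Wt_def alpha_def by (intro mult_mono) auto
  then show ?thesis by simp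
qed

lemma Wt_max:
  assumes "0 < \<delta>" "1 \<le> i" "i \<le> l" "l \<le> w" "w \<le> wb" "0 < Lh" "2 * Lh < real l"
  shows "Wt \<delta> l i \<le> max (exp (- Lh * wb powr (-\<delta>))) (Lh powr (-\<delta>))"
proof (cases "Lh \<le> real (l - i)")
  case True
  have w1: "1 \<le> w" using assms by simp
  have "Wt \<delta> l i \<le> exp (- real (l - i) * real w powr (-\<delta>))" using assms Wt_le_exp by blast
  also have "\<dots> \<le> exp (- Lh * wb powr (-\<delta>))"
  proof -
    have "wb powr (-\<delta>) \<le> real w powr (-\<delta>)" using assms w1 by (intro powr_mono2') auto
    then have "Lh * wb powr (-\<delta>) \<le> real (l - i) * real w powr (-\<delta>)"
      using True assms by (intro mult_mono) auto
    then show ?thesis by simp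
  qed
  finally show ?thesis by simp
next
  case False
  then have "Lh < real i" using assms by (simp add: of_nat_diff)
  then have "real i powr (-\<delta>) \<le> Lh powr (-\<delta>)" using assms by (intro powr_mono2') auto
  then show ?thesis using Wt_le_pow[OF assms(1,2), of l] by simp
qed

lemma det_main:
  fixes x :: "nat \<Rightarrow> real"
  assumes d: "0 < \<delta>" and fin: "finite A" and i0: "1 \<le> i0" "i0 \<le> l" "l \<le> card A"
    and x01: "\<forall>i\<in>{1..l}. 0 \<le> x (Tp A i) \<and> x (Tp A i) \<le> 1"
    and hoeff: "\<bar>(\<Sum>i\<in>{i0..l}. Wt \<delta> l i * x (Tp A i)) - (\<Sum>i\<in>{i0..l}. Wt \<delta> l i * mk)\<bar> < \<epsilon>"
  shows "\<bar>Yrec \<delta> (\<lambda>i. x (Tp A i)) l - mk\<bar> \<le> (\<Prod>r\<in>{i0..l}. alpha \<delta> r) + \<epsilon> + \<bar>mk\<bar> * (\<Prod>r\<in>{i0..l}. alpha \<delta> r)"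
proof -
  define P where "P = (\<Prod>r\<in>{i0..l}. alpha \<delta> r)"
  define S1 where "S1 = (\<Sum>i\<in>{1..<i0}. Wt \<delta> l i * x (Tp A i))"
  define S2 where "S2 = (\<Sum>i\<in>{i0..l}. Wt \<delta> l i * x (Tp A i))"
  have split: "{1..l} = {1..<i0} \<union> {i0..l}" using i0 by auto
  have Y: "Yrec \<delta> (\<lambda>i. x (Tp A i)) l = S1 + S2"
    unfolding Yrec_sum S1_def S2_def split by (subst sum.union_disjoint) auto
  have sumall: "(\<Sum>i\<in>{1..l}. Wt \<delta> l i) = 1" using Wsum1 i0 by simp
  have sum2: "(\<Sum>i\<in>{i0..l}. Wt \<delta> l i) = 1 - P" unfolding P_def using Wsum i0 by simp
  have sum1: "(\<Sum>i\<in>{1..<i0}. Wt \<delta> l i) = P"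
    using sumall sum2 unfolding split by (subst (asm) sum.union_disjoint) auto
  have S1lo: "0 \<le> S1" unfolding S1_def using x01 i0 Wt_nonneg[OF d]
    by (intro sum_nonneg mult_nonneg_nonneg) auto
  have S1hi: "S1 \<le> P" unfolding S1_def sum1[symmetric] using x01 i0 Wt_nonneg[OF d]
    by (intro sum_mono) (auto intro: mult_left_le)
  have S2m: "(\<Sum>i\<in>{i0..l}. Wt \<delta> l i * mk) = mk * (1 - P)"
    using sum2 by (simp add: sum_distrib_right[symmetric])
  have Pnn: "0 \<le> P" unfolding P_def using d i0 by (intro prod_alpha_le1) auto
  have "Yrec \<delta> (\<lambda>i. x (Tp A i)) l - mk = S1 + (S2 - mk * (1 - P)) - mk * P"
    using Y by (simp add: algebra_simps)
  moreover have "\<bar>S2 - mk * (1 - P)\<bar> < \<epsilon>" using hoeff S2m unfolding S2_def by simp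
  moreover have "\<bar>mk * P\<bar> = \<bar>mk\<bar> * P" using Pnn by (simp add: abs_mult)
  ultimately show ?thesis using S1lo S1hi unfolding P_def[symmetric] by linarith
qed



lemma (in prob_space) indep_sets_reindex:
  assumes ind: "indep_sets F (g ` I)" and inj: "inj_on g I"
  shows "indep_sets (\<lambda>i. F (g i)) I"
  unfolding indep_sets_def
proof (intro conjI ballI allI impI)
  fix i assume "i \<in> I"
  then show "F (g i) \<subseteq> events" using ind unfolding indep_sets_def by auto
next
  fix J A assume J: "J \<subseteq> I" "J \<noteq> {}" "finite J" and A: "A \<in> Pi J (\<lambda>i. F (g i))"
  define A' where "A' = (\<lambda>y. A (the_inv_into J g y))"
  have injJ: "inj_on g J" using inj J(1) by (rule inj_on_subset)
  have A'g: "\<And>j. j \<in> J \<Longrightarrow> A' (g j) = A j"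
    unfolding A'_def using injJ by (simp add: the_inv_into_f_f)
  have "A' \<in> Pi (g ` J) F" using A A'g by auto
  then have "prob (\<Inter>j\<in>g ` J. A' j) = (\<Prod>j\<in>g ` J. prob (A' j))"
  proof -
    have "g ` J \<subseteq> g ` I" "g ` J \<noteq> {}" "finite (g ` J)" using J by auto
    then show ?thesis using ind \<open>A' \<in> Pi (g ` J) F\<close> unfolding indep_sets_def by blast
  qed
  moreover have "(\<Inter>j\<in>g ` J. A' j) = (\<Inter>j\<in>J. A j)" using A'g by auto
  moreover have "(\<Prod>j\<in>g ` J. prob (A' j)) = (\<Prod>j\<in>J. prob (A j))"
    using injJ A'g by (simp add: prod.reindex)
  ultimately show "prob (\<Inter>j\<in>J. A j) = (\<Prod>j\<in>J. prob (A j))" by simp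
qed

lemma (in prob_space) indep_vars_reindex:
  assumes ind: "indep_vars M' Y (g ` I)" and inj: "inj_on g I"
  shows "indep_vars (\<lambda>i. M' (g i)) (\<lambda>i. Y (g i)) I"
proof -
  have "indep_sets (\<lambda>i. {Y i -` A \<inter> space M | A. A \<in> sets (M' i)}) (g ` I)"
    using ind unfolding indep_vars_def2 by auto
  from indep_sets_reindex[OF this inj]
  have "indep_sets (\<lambda>i. {Y (g i) -` A \<inter> space M | A. A \<in> sets (M' (g i))}) I" by simp
  moreover have "\<forall>i\<in>I. random_variable (M' (g i)) (Y (g i))"
    using ind unfolding indep_vars_def2 by auto
  ultimately show ?thesis unfolding indep_vars_def2 by simp
qed

lemma (in prob_space) chernoff:
  fixes Z :: "nat \<Rightarrow> 'a \<Rightarrow> real"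
  assumes fin: "finite J" and ind: "indep_vars (\<lambda>_. borel) Z J"
    and Z01: "\<forall>j\<in>J. \<forall>\<omega>\<in>space M. Z j \<omega> = 0 \<or> Z j \<omega> = 1"
  shows "prob {\<omega>\<in>space M. c \<le> lam * (\<Sum>j\<in>J. Z j \<omega>)}
           \<le> exp ((exp lam - 1) * (\<Sum>j\<in>J. prob {\<omega>\<in>space M. Z j \<omega> = 1}) - c)"
proof -
  have rv[measurable]: "Z j \<in> borel_measurable M" if "j \<in> J" for j
    using ind that unfolding indep_vars_def by auto
  define E where "E j \<omega> = exp (lam * Z j \<omega>)" for j \<omega>
  have rvE[measurable]: "E j \<in> borel_measurable M" if "j \<in> J" for j
    unfolding E_def using that by measurable
  have indE: "indep_vars (\<lambda>_. borel) E J"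
    unfolding E_def by (rule indep_vars_compose2[OF ind]) measurable
  have bnd: "\<bar>E j \<omega>\<bar> \<le> exp \<bar>lam\<bar>" if "j \<in> J" "\<omega> \<in> space M" for j \<omega>
  proof -
    have "Z j \<omega> = 0 \<or> Z j \<omega> = 1" using Z01 that by auto
    then show ?thesis unfolding E_def by auto
  qed
  have intE: "integrable M (E j)" if "j \<in> J" for j
    using that bnd by (intro integrable_const_bound[where B="exp \<bar>lam\<bar>"]) auto
  define p where "p j = prob {\<omega>\<in>space M. Z j \<omega> = 1}" for j
  have Ej: "(\<integral>\<omega>. E j \<omega> \<partial>M) = 1 + (exp lam - 1) * p j" if j: "j \<in> J" for j
  proof -
    have ev: "{\<omega>\<in>space M. Z j \<omega> = 1} \<in> events" using j by measurable
    have "(\<integral>\<omega>. E j \<omega> \<partial>M) = (\<integral>\<omega>. 1 + (exp lam - 1) * indicator {\<omega>\<in>space M. Z j \<omega> = 1} \<omega> \<partial>M)"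
      unfolding E_def
    proof (intro Bochner_Integration.integral_cong refl)
      fix \<omega> assume "\<omega> \<in> space M"
      then have "Z j \<omega> = 0 \<or> Z j \<omega> = 1" using Z01 j by auto
      then show "exp (lam * Z j \<omega>) = 1 + (exp lam - 1) * indicator {\<omega>\<in>space M. Z j \<omega> = 1} \<omega>"
        using \<open>\<omega> \<in> space M\<close> by (auto simp: indicator_def)
    qed
    also have "\<dots> = 1 + (exp lam - 1) * p j"
    proof -
      have "integrable M (indicator {\<omega>\<in>space M. Z j \<omega> = 1} :: 'a \<Rightarrow> real)"
        using ev by (intro integrable_real_indicator) (auto simp: less_top[symmetric])
      have "(\<integral>\<omega>. 1 + (exp lam - 1) * indicator {\<omega>\<in>space M. Z j \<omega> = 1} \<omega> \<partial>M)
          = (\<integral>\<omega>. 1 \<partial>M) + (\<integral>\<omega>. (exp lam - 1) * indicator {\<omega>\<in>space M. Z j \<omega> = 1} \<omega> \<partial>M)"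
        using ev \<open>integrable M _\<close> by (intro Bochner_Integration.integral_add) auto
      also have "\<dots> = 1 + (exp lam - 1) * p j"
        using ev unfolding p_def by (simp add: prob_space)
      finally show ?thesis .
    qed
    finally show ?thesis .
  qed
  have pj: "0 \<le> p j" "p j \<le> 1" for j unfolding p_def by auto
  define F where "F \<omega> = (\<Prod>j\<in>J. E j \<omega>)" for \<omega>
  have intF: "integrable M F" unfolding F_def using indep_vars_integrable[OF fin indE intE] by simp
  have EF: "(\<integral>\<omega>. F \<omega> \<partial>M) = (\<Prod>j\<in>J. 1 + (exp lam - 1) * p j)"
    unfolding F_def using indep_vars_lebesgue_integral[OF fin indE intE] Ej by simp
  also have "\<dots> \<le> (\<Prod>j\<in>J. exp ((exp lam - 1) * p j))"
  proof (rule prod_mono)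
    fix j assume "j \<in> J"
    have "0 \<le> (1 - p j) + exp lam * p j" using pj[of j] by (intro add_nonneg_nonneg) auto
    then show "0 \<le> 1 + (exp lam - 1) * p j \<and> 1 + (exp lam - 1) * p j \<le> exp ((exp lam - 1) * p j)"
      using exp_ge_add_one_self[of "(exp lam - 1) * p j"] by (simp add: algebra_simps)
  qed
  also have "\<dots> = exp ((exp lam - 1) * (\<Sum>j\<in>J. p j))"
    by (simp add: exp_sum[OF fin, symmetric] sum_distrib_left)
  finally have EFb: "(\<integral>\<omega>. F \<omega> \<partial>M) \<le> exp ((exp lam - 1) * (\<Sum>j\<in>J. p j))" .
  have Feq: "F \<omega> = exp (lam * (\<Sum>j\<in>J. Z j \<omega>))" for \<omega>
    unfolding F_def E_def by (simp add: exp_sum[OF fin, symmetric] sum_distrib_left)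
  have "{\<omega>\<in>space M. c \<le> lam * (\<Sum>j\<in>J. Z j \<omega>)} = {\<omega>\<in>space M. exp c \<le> F \<omega>}"
    unfolding Feq by auto
  then have "prob {\<omega>\<in>space M. c \<le> lam * (\<Sum>j\<in>J. Z j \<omega>)} = prob {\<omega>\<in>space M. exp c \<le> F \<omega>}" by simp
  also have "\<dots> \<le> (\<integral>\<omega>. F \<omega> \<partial>M) / exp c"
    by (rule integral_Markov_inequality_measure[OF intF, where A="space M"]) (auto simp: Feq)
  also have "\<dots> \<le> exp ((exp lam - 1) * (\<Sum>j\<in>J. p j)) / exp c"
    using EFb by (simp add: divide_right_mono)
  also have "\<dots> = exp ((exp lam - 1) * (\<Sum>j\<in>J. p j) - c)" by (simp add: exp_diff)
  finally show ?thesis unfolding p_def .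
qed



lemma comp_meas_any[measurable]:
  "(\<lambda>f. f j) \<in> borel_measurable (PiM I (\<lambda>_. borel :: real measure))"
proof (cases "j \<in> I")
  case True
  then show ?thesis by measurable
next
  case False
  have "(\<lambda>f. undefined :: real) \<in> borel_measurable (PiM I (\<lambda>_. borel))" by simp
  then show ?thesis
    by (rule measurable_cong[THEN iffD1, rotated]) (use False in \<open>auto simp: space_PiM PiE_def extensional_def\<close>)
qed

locale setting = prob_space +
  fixes X Z :: "nat \<Rightarrow> 'a \<Rightarrow> real" and t :: nat
  assumes indep: "indep_vars (\<lambda>_. borel) (\<lambda>i. case i of Inl j \<Rightarrow> X j | Inr j \<Rightarrow> Z j) ({1..t} <+> {1..t})"
begin

definition "Vj = (\<lambda>i. case i of Inl j \<Rightarrow> X j | Inr j \<Rightarrow> Z j)"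
definition "Xv \<omega> = (\<lambda>j\<in>{1..t}. X j \<omega>)"
definition "Zv \<omega> = (\<lambda>j\<in>{1..t}. Z j \<omega>)"

lemma indX: "indep_vars (\<lambda>_. borel) X {1..t}"
proof -
  have "indep_vars (\<lambda>_. borel) Vj (Inl ` {1..t})"
    using indep unfolding Vj_def by (rule indep_vars_subset) auto
  from indep_vars_reindex[OF this] show ?thesis by (simp add: Vj_def inj_on_def)
qed

lemma indZ: "indep_vars (\<lambda>_. borel) Z {1..t}"
proof -
  have "indep_vars (\<lambda>_. borel) Vj (Inr ` {1..t})"
    using indep unfolding Vj_def by (rule indep_vars_subset) auto
  from indep_vars_reindex[OF this] show ?thesis by (simp add: Vj_def inj_on_def)
qed

lemma rvX: "j \<in> {1..t} \<Longrightarrow> X j \<in> borel_measurable M"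
  using indX unfolding indep_vars_def by auto

lemma rvZ: "j \<in> {1..t} \<Longrightarrow> Z j \<in> borel_measurable M"
  using indZ unfolding indep_vars_def by auto

lemma Xv_meas: "Xv \<in> measurable M (PiM {1..t} (\<lambda>_. borel))"
  unfolding Xv_def by (rule measurable_restrict) (rule rvX)

lemma Zv_meas: "Zv \<in> measurable M (PiM {1..t} (\<lambda>_. borel))"
  unfolding Zv_def by (rule measurable_restrict) (rule rvZ)

lemma Xv_comp[measurable]: "(\<lambda>\<omega>. Xv \<omega> j) \<in> borel_measurable M"
  using measurable_compose[OF Xv_meas comp_meas_any] by simp

lemma Zv_comp[measurable]: "(\<lambda>\<omega>. Zv \<omega> j) \<in> borel_measurable M"
  using measurable_compose[OF Zv_meas comp_meas_any] by simp

lemma indXZ: "indep_var (PiM {1..t} (\<lambda>_. borel)) Xv (PiM {1..t} (\<lambda>_. borel)) Zv"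
proof -
  have r: "indep_var (PiM (Inl ` {1..t}) (\<lambda>_. borel)) (\<lambda>\<omega>. restrict (\<lambda>i. Vj i \<omega>) (Inl ` {1..t}))
              (PiM (Inr ` {1..t}) (\<lambda>_. borel)) (\<lambda>\<omega>. restrict (\<lambda>i. Vj i \<omega>) (Inr ` {1..t}))"
    using indep unfolding Vj_def by (intro indep_var_restrict) auto
  define F1 where "F1 = (\<lambda>f :: nat + nat \<Rightarrow> real. \<lambda>j\<in>{1..t}. f (Inl j))"
  define F2 where "F2 = (\<lambda>f :: nat + nat \<Rightarrow> real. \<lambda>j\<in>{1..t}. f (Inr j))"
  have m1: "F1 \<in> measurable (PiM (Inl ` {1..t}) (\<lambda>_. borel)) (PiM {1..t} (\<lambda>_. borel))"
    unfolding F1_def by (rule measurable_restrict) (rule measurable_component_singleton, auto)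
  have m2: "F2 \<in> measurable (PiM (Inr ` {1..t}) (\<lambda>_. borel)) (PiM {1..t} (\<lambda>_. borel))"
    unfolding F2_def by (rule measurable_restrict) (rule measurable_component_singleton, auto)
  have e1: "F1 \<circ> (\<lambda>\<omega>. restrict (\<lambda>i. Vj i \<omega>) (Inl ` {1..t})) = Xv"
    by (auto simp: F1_def Xv_def Vj_def fun_eq_iff restrict_def)
  have e2: "F2 \<circ> (\<lambda>\<omega>. restrict (\<lambda>i. Vj i \<omega>) (Inr ` {1..t})) = Zv"
    by (auto simp: F2_def Zv_def Vj_def fun_eq_iff restrict_def)
  show ?thesis using indep_var_compose[OF r m1 m2] unfolding e1 e2 .
qed

lemma factor:
  assumes "Bx \<in> sets (PiM {1..t} (\<lambda>_. borel))" "Bz \<in> sets (PiM {1..t} (\<lambda>_. borel))"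
  shows "prob {\<omega>\<in>space M. Xv \<omega> \<in> Bx \<and> Zv \<omega> \<in> Bz} = prob {\<omega>\<in>space M. Xv \<omega> \<in> Bx} * prob {\<omega>\<in>space M. Zv \<omega> \<in> Bz}"
proof -
  have "prob ((\<lambda>x. (Xv x, Zv x)) -` (Bx \<times> Bz) \<inter> space M) = prob (Xv -` Bx \<inter> space M) * prob (Zv -` Bz \<inter> space M)"
    by (rule indep_varD[OF indXZ assms])
  moreover have "(\<lambda>x. (Xv x, Zv x)) -` (Bx \<times> Bz) \<inter> space M = {\<omega>\<in>space M. Xv \<omega> \<in> Bx \<and> Zv \<omega> \<in> Bz}" by auto
  moreover have "Xv -` Bx \<inter> space M = {\<omega>\<in>space M. Xv \<omega> \<in> Bx}" by auto
  moreover have "Zv -` Bz \<inter> space M = {\<omega>\<in>space M. Zv \<omega> \<in> Bz}" by auto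
  ultimately show ?thesis by simp
qed

end


lemma powr_step:
  fixes n p :: real
  assumes "0 \<le> n" "0 < p" "p < 1"
  shows "(n + 1) powr (p - 1) \<le> ((n + 1) powr p - n powr p) / p"
proof (cases "n = 0")
  case True
  then show ?thesis using assms by simp
next
  case False
  then have n: "0 < n" using assms by simp
  have "\<exists>z>n. z < n + 1 \<and> (n+1) powr p - n powr p = ((n+1) - n) * (p * z powr (p - 1))"
    by (rule MVT2[of n "n+1" "\<lambda>x. x powr p" "\<lambda>x. p * x powr (p - 1)"]) (use n in \<open>auto intro!: has_real_derivative_powr\<close>)
  then obtain z where z: "n < z" "z < n + 1" "(n+1) powr p - n powr p = ((n+1) - n) * (p * z powr (p - 1))"
    by blast
  have "(n + 1) powr (p - 1) \<le> z powr (p - 1)" using z n assms by (intro powr_mono2') auto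
  then show ?thesis using z assms by (simp add: field_simps)
qed

lemma psum:
  fixes \<beta> :: real
  assumes "0 < \<beta>" "\<beta> < 1"
  shows "(\<Sum>j\<in>{1..t}. real j powr (-\<beta>)) \<le> real t powr (1 - \<beta>) / (1 - \<beta>)"
proof (induction t)
  case 0
  then show ?case by simp
next
  case (Suc t)
  have "real (Suc t) powr (-\<beta>) \<le> (real (Suc t) powr (1 - \<beta>) - real t powr (1 - \<beta>)) / (1 - \<beta>)"
    using powr_step[of "real t" "1 - \<beta>"] assms by (simp add: add.commute)
  moreover have "(real (Suc t) powr (1 - \<beta>) - real t powr (1 - \<beta>)) / (1 - \<beta>) + real t powr (1 - \<beta>) / (1 - \<beta>)
     = real (Suc t) powr (1 - \<beta>) / (1 - \<beta>)" by (simp add: diff_divide_distrib)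
  ultimately show ?case using Suc by simp
qed

lemma card_eq_sum01:
  fixes z :: "nat \<Rightarrow> real"
  assumes "finite S" "\<forall>j\<in>S. z j = 0 \<or> z j = 1"
  shows "real (card {j\<in>S. z j = 1}) = (\<Sum>j\<in>S. z j)"
proof -
  have "(\<Sum>j\<in>S. z j) = (\<Sum>j\<in>S. if z j = 1 then 1 else 0)"
    using assms by (intro sum.cong) auto
  also have "\<dots> = (\<Sum>j\<in>{j\<in>S. z j = 1}. 1)" using assms by (simp add: sum.inter_filter[symmetric])
  finally show ?thesis by simp
qed

definition wbar :: "real \<Rightarrow> nat \<Rightarrow> real" where "wbar \<beta> t = 4 * real t powr (1 - \<beta>) / (1 - \<beta>)"
definition Lw :: "real \<Rightarrow> real \<Rightarrow> nat \<Rightarrow> real" where "Lw \<beta> \<gamma> t = real t powr (\<gamma> - \<beta>) / 4"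
definition Win :: "real \<Rightarrow> nat \<Rightarrow> nat \<Rightarrow> nat set" where
  "Win \<gamma> t a = {j\<in>{1..t}. a \<le> j \<and> real j < real a + real t powr \<gamma>}"
definition Gd :: "real \<Rightarrow> real \<Rightarrow> nat \<Rightarrow> nat set \<Rightarrow> bool" where
  "Gd \<beta> \<gamma> t A \<longleftrightarrow> real (card A) \<le> wbar \<beta> t \<and>
     (\<forall>a\<in>{1..t}. real a + real t powr \<gamma> \<le> real t \<longrightarrow> Lw \<beta> \<gamma> t < real (card (A \<inter> Win \<gamma> t a)))"

lemma Win_card:
  assumes "1 \<le> a" "real a + real t powr \<gamma> \<le> real t"
  shows "real t powr \<gamma> \<le> real (card (Win \<gamma> t a))"
proof -
  define N where "N = nat \<lceil>real t powr \<gamma>\<rceil>"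
  have sub: "{a..<a+N} \<subseteq> Win \<gamma> t a"
  proof
    fix j assume j: "j \<in> {a..<a+N}"
    then have "real j + 1 \<le> real a + real N" by simp
    moreover have "real N < real t powr \<gamma> + 1" unfolding N_def
      using ceiling_correct[of "real t powr \<gamma>"] by simp
    ultimately have "real j < real a + real t powr \<gamma>" by simp
    then show "j \<in> Win \<gamma> t a" using j assms unfolding Win_def by auto
  qed
  have "card {a..<a+N} \<le> card (Win \<gamma> t a)"
    using sub by (intro card_mono) (auto simp: Win_def)
  moreover have "real t powr \<gamma> \<le> real N" unfolding N_def
    using ceiling_correct[of "real t powr \<gamma>"] by simp
  ultimately show ?thesis by simp
qed

lemma Win_sub: "Win \<gamma> t a \<subseteq> {1..t}" by (auto simp: Win_def)

context setting
begin

lemma arr_eq: "\<omega> \<in> space M \<Longrightarrow> arrival_set t (Zv \<omega>) = {j\<in>{1..t}. Z j \<omega> = 1}"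
  by (auto simp: arrival_set_def Zv_def)

lemma probZ_bad:
  fixes \<beta> \<gamma> :: real
  assumes b: "0 < \<beta>" "\<beta> < \<gamma>" "\<gamma> < 1"
    and Z01: "\<forall>j\<in>{1..t}. \<forall>\<omega>\<in>space M. Z j \<omega> = 0 \<or> Z j \<omega> = 1"
    and Zp: "\<forall>j\<in>{1..t}. prob {\<omega>\<in>space M. Z j \<omega> = 1} = real j powr (-\<beta>)"
  shows "prob {\<omega>\<in>space M. \<not> Gd \<beta> \<gamma> t (arrival_set t (Zv \<omega>))}
           \<le> exp (- wbar \<beta> t / 2) + real t * exp (- (real t powr (\<gamma> - \<beta>) / 4))"
proof -
  define Aset where "Aset = {a\<in>{1..t}. real a + real t powr \<gamma> \<le> real t}"
  define B1 where "B1 = {\<omega>\<in>space M. wbar \<beta> t \<le> 1 * (\<Sum>j\<in>{1..t}. Z j \<omega>)}"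
  define B2 where "B2 a = {\<omega>\<in>space M. - Lw \<beta> \<gamma> t \<le> (-1) * (\<Sum>j\<in>Win \<gamma> t a. Z j \<omega>)}" for a
  have rvZ'[measurable]: "\<And>j. j \<in> {1..t} \<Longrightarrow> Z j \<in> borel_measurable M" using rvZ by blast
  have B1m: "B1 \<in> events"
  proof -
    have "(\<lambda>\<omega>. \<Sum>j\<in>{1..t}. Z j \<omega>) \<in> borel_measurable M"
      by (intro borel_measurable_sum) (auto intro: rvZ')
    then show ?thesis unfolding B1_def by measurable
  qed
  have B2m: "B2 a \<in> events" for a
  proof -
    have "(\<lambda>\<omega>. \<Sum>j\<in>Win \<gamma> t a. Z j \<omega>) \<in> borel_measurable M"
      using Win_sub[of \<gamma> t a] by (intro borel_measurable_sum) (auto intro: rvZ')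
    then show ?thesis unfolding B2_def by measurable
  qed
  have sub: "{\<omega>\<in>space M. \<not> Gd \<beta> \<gamma> t (arrival_set t (Zv \<omega>))} \<subseteq> B1 \<union> (\<Union>a\<in>Aset. B2 a)"
  proof
    fix \<omega> assume "\<omega> \<in> {\<omega>\<in>space M. \<not> Gd \<beta> \<gamma> t (arrival_set t (Zv \<omega>))}"
    then have w: "\<omega> \<in> space M" "\<not> Gd \<beta> \<gamma> t {j\<in>{1..t}. Z j \<omega> = 1}" using arr_eq by auto
    have c1: "real (card {j\<in>{1..t}. Z j \<omega> = 1}) = (\<Sum>j\<in>{1..t}. Z j \<omega>)"
      using Z01 w by (intro card_eq_sum01) auto
    have c2: "real (card ({j\<in>{1..t}. Z j \<omega> = 1} \<inter> Win \<gamma> t a)) = (\<Sum>j\<in>Win \<gamma> t a. Z j \<omega>)" for a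
    proof -
      have "{j\<in>{1..t}. Z j \<omega> = 1} \<inter> Win \<gamma> t a = {j\<in>Win \<gamma> t a. Z j \<omega> = 1}" using Win_sub[of \<gamma> t a] by auto
      moreover have "finite (Win \<gamma> t a)" using Win_sub[of \<gamma> t a] finite_subset by blast
      moreover have "\<forall>j\<in>Win \<gamma> t a. Z j \<omega> = 0 \<or> Z j \<omega> = 1" using Z01 w(1) Win_sub[of \<gamma> t a] by blast
      ultimately show ?thesis using card_eq_sum01 by metis
    qed
    show "\<omega> \<in> B1 \<union> (\<Union>a\<in>Aset. B2 a)"
      using w c1 c2 unfolding Gd_def B1_def B2_def Aset_def by auto
  qed
  have "prob {\<omega>\<in>space M. \<not> Gd \<beta> \<gamma> t (arrival_set t (Zv \<omega>))} \<le> prob (B1 \<union> (\<Union>a\<in>Aset. B2 a))"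
    using sub B1m B2m by (intro finite_measure_mono) (auto simp: Aset_def)
  also have "\<dots> \<le> prob B1 + prob (\<Union>a\<in>Aset. B2 a)"
    using B1m B2m by (intro measure_Un_le) (auto simp: Aset_def)
  also have "prob (\<Union>a\<in>Aset. B2 a) \<le> (\<Sum>a\<in>Aset. prob (B2 a))"
    using B2m by (intro finite_measure_subadditive_finite) (auto simp: Aset_def)
  also have "prob B1 \<le> exp (- wbar \<beta> t / 2)"
  proof -
    have "prob B1 \<le> exp ((exp 1 - 1) * (\<Sum>j\<in>{1..t}. prob {\<omega>\<in>space M. Z j \<omega> = 1}) - wbar \<beta> t)"
      unfolding B1_def using Z01 by (intro chernoff indZ) auto
    also have "(\<Sum>j\<in>{1..t}. prob {\<omega>\<in>space M. Z j \<omega> = 1}) = (\<Sum>j\<in>{1..t}. real j powr (-\<beta>))"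
      using Zp by simp
    also have "(exp 1 - 1) * (\<Sum>j\<in>{1..t}. real j powr (-\<beta>)) - wbar \<beta> t \<le> - wbar \<beta> t / 2"
    proof -
      have s: "(\<Sum>j\<in>{1..t}. real j powr (-\<beta>)) \<le> wbar \<beta> t / 4"
      proof -
        have "wbar \<beta> t / 4 = real t powr (1 - \<beta>) / (1 - \<beta>)" unfolding wbar_def by (simp add: divide_simps)
        then show ?thesis using psum[of \<beta> t] b by linarith
      qed
      have "0 \<le> (\<Sum>j\<in>{1..t}. real j powr (-\<beta>))" by (simp add: sum_nonneg)
      moreover have "exp 1 - 1 \<le> (2::real)" using exp_le by simp
      moreover have "0 \<le> exp 1 - (1::real)" by simp
      ultimately have "(exp 1 - 1) * (\<Sum>j\<in>{1..t}. real j powr (-\<beta>)) \<le> 2 * (wbar \<beta> t / 4)"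
        using s by (intro mult_mono) auto
      then show ?thesis by simp
    qed
    finally show ?thesis by simp
  qed
  also have "(\<Sum>a\<in>Aset. prob (B2 a)) \<le> (\<Sum>a\<in>Aset. exp (- (real t powr (\<gamma> - \<beta>) / 4)))"
  proof (rule sum_mono)
    fix a assume a: "a \<in> Aset"
    have "prob (B2 a) \<le> exp ((exp (-1) - 1) * (\<Sum>j\<in>Win \<gamma> t a. prob {\<omega>\<in>space M. Z j \<omega> = 1}) - - Lw \<beta> \<gamma> t)"
      unfolding B2_def using Z01 Win_sub[of \<gamma> t a]
      by (intro chernoff indep_vars_subset[OF indZ]) (auto simp: Win_def)
    also have "(\<Sum>j\<in>Win \<gamma> t a. prob {\<omega>\<in>space M. Z j \<omega> = 1}) = (\<Sum>j\<in>Win \<gamma> t a. real j powr (-\<beta>))"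
      using Zp Win_sub[of \<gamma> t a] by (intro sum.cong) auto
    also have "(exp (-1) - 1) * (\<Sum>j\<in>Win \<gamma> t a. real j powr (-\<beta>)) - - Lw \<beta> \<gamma> t \<le> - (real t powr (\<gamma> - \<beta>) / 4)"
    proof -
      have t1: "1 \<le> t" using a unfolding Aset_def by auto
      have "(\<Sum>j\<in>Win \<gamma> t a. real t powr (-\<beta>)) \<le> (\<Sum>j\<in>Win \<gamma> t a. real j powr (-\<beta>))"
        using b by (intro sum_mono powr_mono2') (auto simp: Win_def)
      moreover have "real t powr \<gamma> * real t powr (-\<beta>) \<le> real (card (Win \<gamma> t a)) * real t powr (-\<beta>)"
        using Win_card[of a t \<gamma>] a unfolding Aset_def by (intro mult_right_mono) auto
      moreover have "real t powr \<gamma> * real t powr (-\<beta>) = real t powr (\<gamma> - \<beta>)"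
        using t1 by (simp add: powr_add[symmetric])
      ultimately have m: "real t powr (\<gamma> - \<beta>) \<le> (\<Sum>j\<in>Win \<gamma> t a. real j powr (-\<beta>))" by simp
      have e: "exp (-1) \<le> (1/2::real)"
      proof -
        have "(2::real) \<le> exp 1" using exp_ge_add_one_self[of 1] by simp
        then show ?thesis by (simp add: exp_minus field_simps)
      qed
      have "(exp (-1) - 1) * (\<Sum>j\<in>Win \<gamma> t a. real j powr (-\<beta>)) \<le> (-1/2) * real t powr (\<gamma> - \<beta>)"
      proof -
        have S0: "0 \<le> (\<Sum>j\<in>Win \<gamma> t a. real j powr (-\<beta>))" by (simp add: sum_nonneg)
        have "(exp (-1) - 1) * (\<Sum>j\<in>Win \<gamma> t a. real j powr (-\<beta>)) \<le> (-1/2) * (\<Sum>j\<in>Win \<gamma> t a. real j powr (-\<beta>))"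
          using e S0 by (intro mult_right_mono) auto
        also have "\<dots> \<le> (-1/2) * real t powr (\<gamma> - \<beta>)" using m by simp
        finally show ?thesis .
      qed
      then show ?thesis unfolding Lw_def by simp
    qed
    finally show "prob (B2 a) \<le> exp (- (real t powr (\<gamma> - \<beta>) / 4))" by simp
  qed
  also have "(\<Sum>a\<in>Aset. exp (- (real t powr (\<gamma> - \<beta>) / 4))) \<le> real t * exp (- (real t powr (\<gamma> - \<beta>) / 4))"
  proof -
    have "Aset \<subseteq> {1..t}" by (auto simp: Aset_def)
    then have "card Aset \<le> card {1..t}" by (intro card_mono) auto
    then have "card Aset \<le> t" by simp
    then show ?thesis by (simp add: mult_right_mono)
  qed
  finally show ?thesis by simp
qed

end


definition i0f :: "nat set \<Rightarrow> nat \<Rightarrow> nat" where "i0f A a = card {j\<in>A. j < a} + 1"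

locale setting2 = setting +
  fixes \<beta> \<gamma> \<delta> \<mu>0 b :: real and MM :: nat and s :: "nat \<Rightarrow> nat" and m :: "nat \<Rightarrow> real"
  assumes params: "0 < \<beta>" "\<beta> < \<gamma>" "\<gamma> < 1" "0 < \<delta>" "0 < \<mu>0" "0 < b"
    and t1: "1 \<le> t"
    and X01: "\<forall>j\<in>{1..t}. \<forall>\<omega>\<in>space M. 0 \<le> X j \<omega> \<and> X j \<omega> \<le> 1"
    and Z01: "\<forall>j\<in>{1..t}. \<forall>\<omega>\<in>space M. Z j \<omega> = 0 \<or> Z j \<omega> = 1"
    and Zp: "\<forall>j\<in>{1..t}. prob {\<omega>\<in>space M. Z j \<omega> = 1} = real j powr (-\<beta>)"
    and ks: "\<forall>k\<in>{1..MM-1}. k \<le> s k"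
    and mean: "\<forall>k\<in>{1..MM-1}. \<forall>j. s k \<le> j \<and> j < s (Suc k) \<longrightarrow> expectation (X j) = m k"
    and mge: "\<forall>k\<in>{1..MM-1}. \<mu>0 \<le> m k"
    and N1a: "exp (- Lw \<beta> \<gamma> t * wbar \<beta> t powr (-\<delta>)) \<le> \<mu>0 * real t powr (-b) / 4"
    and N1b: "exp (- Lw \<beta> \<gamma> t * wbar \<beta> t powr (-\<delta>)) \<le> real t powr (-b) / 4"
    and N2: "exp (- (Lw \<beta> \<gamma> t / 2) * wbar \<beta> t powr (-\<delta>)) \<le> (Lw \<beta> \<gamma> t / 2) powr (-\<delta>)"
begin

abbreviation "eps \<equiv> \<mu>0 * real t powr (-b) / 2"
abbreviation "Lt \<equiv> Lw \<beta> \<gamma> t"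
abbreviation "wt \<equiv> wbar \<beta> t"

definition Pairs :: "nat set \<Rightarrow> (nat \<times> nat) set" where
  "Pairs A = {(k,l). k \<in> {1..MM-1} \<and> l \<in> {1..card A} \<and> real (s k) + real t powr \<gamma> \<le> real (Tp A l) \<and> Tp A l < s (Suc k)}"

definition Hg :: "nat set \<Rightarrow> nat \<Rightarrow> nat \<Rightarrow> (nat \<Rightarrow> real) \<Rightarrow> bool" where
  "Hg A k l f \<longleftrightarrow> \<bar>(\<Sum>i\<in>{i0f A (s k)..l}. Wt \<delta> l i * f (Tp A i)) - (\<Sum>i\<in>{i0f A (s k)..l}. Wt \<delta> l i * m k)\<bar> < eps"

definition HA :: "nat set \<Rightarrow> (nat \<Rightarrow> real) \<Rightarrow> bool" where
  "HA A f \<longleftrightarrow> (\<forall>p\<in>Pairs A. Hg A (fst p) (snd p) f)"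

lemma Lt_pos: "0 < Lt" unfolding Lw_def using t1 by simp

lemma pair_facts:
  assumes A: "A \<subseteq> {1..t}" and G: "Gd \<beta> \<gamma> t A" and p: "(k,l) \<in> Pairs A"
  shows "1 \<le> i0f A (s k)" "i0f A (s k) \<le> l" "l \<le> card A" "1 \<le> l"
    "Lt < real (l - i0f A (s k))"
    "\<forall>i\<in>{i0f A (s k)..l}. s k \<le> Tp A i \<and> Tp A i < s (Suc k)"
    "k \<in> {1..MM-1}" "k \<le> t" "l \<le> t"
proof -
  have fin: "finite A" using A finite_subset by blast
  have k: "k \<in> {1..MM-1}" and l: "1 \<le> l" "l \<le> card A"
    and sT: "real (s k) + real t powr \<gamma> \<le> real (Tp A l)" and Ts: "Tp A l < s (Suc k)"
    using p unfolding Pairs_def by auto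
  have TlA: "Tp A l \<in> A" using Tp_in[OF fin l] .
  then have Tlt: "Tp A l \<le> t" using A by auto
  have skT: "s k \<le> Tp A l" using sT by (smt (verit) of_nat_le_iff powr_ge_zero)
  have cnt: "card {j\<in>A. j < s k} < l" using Tp_ge_iff[OF fin l] skT by simp
  show "1 \<le> i0f A (s k)" "i0f A (s k) \<le> l" "l \<le> card A" "1 \<le> l" "k \<in> {1..MM-1}"
    using cnt l k unfolding i0f_def by auto
  have card_A: "card A \<le> t" using A card_mono[of "{1..t}" A] by auto
  show "l \<le> t" using l card_A by simp
  have sk1: "1 \<le> s k" using ks k by force
  show "k \<le> t" using ks k skT Tlt by force
  show "\<forall>i\<in>{i0f A (s k)..l}. s k \<le> Tp A i \<and> Tp A i < s (Suc k)"
  proof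
    fix i assume i: "i \<in> {i0f A (s k)..l}"
    then have i1: "1 \<le> i" "i \<le> card A" using l unfolding i0f_def by auto
    have "s k \<le> Tp A i" using Tp_ge_iff[OF fin i1] i unfolding i0f_def by auto
    moreover have "Tp A i \<le> Tp A l"
    proof (cases "i = l")
      case False
      then have "i < l" using i by auto
      then show ?thesis using Tp_mono[OF fin i1(1) _ l(2)] by (simp add: less_imp_le)
    qed simp
    ultimately show "s k \<le> Tp A i \<and> Tp A i < s (Suc k)" using Ts by simp
  qed
  have win: "Lt < real (card (A \<inter> Win \<gamma> t (s k)))"
    using G sk1 Tlt sT unfolding Gd_def by (smt (verit) atLeastAtMost_iff of_nat_le_iff skT)
  have sub: "A \<inter> Win \<gamma> t (s k) \<subseteq> {j\<in>A. j < Tp A l} - {j\<in>A. j < s k}"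
    using sT unfolding Win_def by auto
  have sub2: "{j\<in>A. j < s k} \<subseteq> {j\<in>A. j < Tp A l}" using skT by auto
  have "card (A \<inter> Win \<gamma> t (s k)) \<le> card ({j\<in>A. j < Tp A l} - {j\<in>A. j < s k})"
    using sub fin by (intro card_mono) auto
  also have "\<dots> = card {j\<in>A. j < Tp A l} - card {j\<in>A. j < s k}"
    using sub2 fin by (intro card_Diff_subset) auto
  also have "\<dots> = (l - 1) - card {j\<in>A. j < s k}" using Tp_cnt[OF fin l] by simp
  also have "\<dots> = l - i0f A (s k)" unfolding i0f_def by simp
  finally show "Lt < real (l - i0f A (s k))" using win by linarith
qed

end


context setting2
begin

lemma prodP_bound:
  assumes A: "A \<subseteq> {1..t}" and G: "Gd \<beta> \<gamma> t A" and p: "(k,l) \<in> Pairs A"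
  shows "(\<Prod>r\<in>{i0f A (s k)..l}. alpha \<delta> r) \<le> exp (- Lt * wt powr (-\<delta>))"
proof -
  note pf = pair_facts[OF A G p]
  have "(\<Prod>r\<in>{i0f A (s k)..l}. alpha \<delta> r) \<le> exp (- real (card {i0f A (s k)..l}) * real (card A) powr (-\<delta>))"
    using pf params by (intro prod_alpha_bound) auto
  also have "\<dots> \<le> exp (- Lt * wt powr (-\<delta>))"
  proof -
    have c: "card {i0f A (s k)..l} = l + 1 - i0f A (s k)" by simp
    have "Lt \<le> real (card {i0f A (s k)..l})" using pf(5) pf(2) unfolding c by linarith
    moreover have "wt powr (-\<delta>) \<le> real (card A) powr (-\<delta>)"
      using G pf params unfolding Gd_def by (intro powr_mono2') auto
    moreover have "0 \<le> wt powr (-\<delta>)" by simp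
    moreover have "0 \<le> Lt" using Lt_pos by simp
    ultimately have "Lt * wt powr (-\<delta>) \<le> real (card {i0f A (s k)..l}) * real (card A) powr (-\<delta>)"
      by (intro mult_mono) auto
    then show ?thesis by simp
  qed
  finally show ?thesis .
qed

lemma det_pair:
  assumes A: "A \<subseteq> {1..t}" and G: "Gd \<beta> \<gamma> t A" and p: "(k,l) \<in> Pairs A"
    and x01: "\<forall>j\<in>{1..t}. 0 \<le> x j \<and> x j \<le> 1"
    and H: "Hg A k l x"
  shows "\<bar>Yrec \<delta> (\<lambda>i. x (Tp A i)) l - m k\<bar> \<le> m k / real t powr b"
proof -
  note pf = pair_facts[OF A G p]
  have fin: "finite A" using A finite_subset by blast
  define P where "P = (\<Prod>r\<in>{i0f A (s k)..l}. alpha \<delta> r)"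
  have x01': "\<forall>i\<in>{1..l}. 0 \<le> x (Tp A i) \<and> x (Tp A i) \<le> 1"
  proof
    fix i assume "i \<in> {1..l}"
    then have "Tp A i \<in> A" using pf by (intro Tp_in[OF fin]) auto
    then show "0 \<le> x (Tp A i) \<and> x (Tp A i) \<le> 1" using A x01 by auto
  qed
  have "\<bar>Yrec \<delta> (\<lambda>i. x (Tp A i)) l - m k\<bar> \<le> P + eps + \<bar>m k\<bar> * P"
    unfolding P_def using H unfolding Hg_def
    by (intro det_main[OF params(4) fin pf(1) pf(2) pf(3) x01'])
  moreover have Pb: "P \<le> \<mu>0 * real t powr (-b) / 4" "P \<le> real t powr (-b) / 4"
    using prodP_bound[OF A G p] N1a N1b unfolding P_def by auto
  moreover have mk: "\<mu>0 \<le> m k" using mge pf by auto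
  moreover have "0 \<le> P" unfolding P_def using params pf by (intro prod_alpha_le1) auto
  ultimately have "\<bar>Yrec \<delta> (\<lambda>i. x (Tp A i)) l - m k\<bar> \<le> m k * real t powr (-b) / 4 + m k * real t powr (-b) / 2 + m k * (real t powr (-b) / 4)"
  proof -
    assume a: "\<bar>Yrec \<delta> (\<lambda>i. x (Tp A i)) l - m k\<bar> \<le> P + eps + \<bar>m k\<bar> * P"
    have m0: "0 < m k" using mk params by simp
    have tb: "0 \<le> real t powr (-b)" by simp
    have "P \<le> m k * real t powr (-b) / 4" using Pb(1) mk tb
      by (smt (verit) mult_right_mono divide_right_mono)
    moreover have "eps \<le> m k * real t powr (-b) / 2" using mk tb
      by (intro divide_right_mono mult_right_mono) auto
    moreover have "\<bar>m k\<bar> * P \<le> m k * (real t powr (-b) / 4)" using m0 Pb(2)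
      by (simp add: mult_left_mono)
    ultimately show ?thesis using a by linarith
  qed
  also have "\<dots> = m k * real t powr (-b)" by (simp add: field_simps)
  also have "\<dots> = m k / real t powr b" by (simp add: powr_minus divide_inverse)
  finally show ?thesis .
qed

end


context setting2
begin

lemma hoeff_pair:
  assumes A: "A \<subseteq> {1..t}" and G: "Gd \<beta> \<gamma> t A" and p: "(k,l) \<in> Pairs A"
  shows "prob {\<omega>\<in>space M. \<not> Hg A k l (Xv \<omega>)} \<le> 2 * exp (-2 * eps\<^sup>2 / (Lt / 2) powr (-\<delta>))"
proof -
  note pf = pair_facts[OF A G p]
  have fin: "finite A" using A finite_subset by blast
  define i0 where "i0 = i0f A (s k)"
  define I where "I = {i0..l}"
  define W where "W i = Wt \<delta> l i" for i
  define Y where "Y i \<omega> = W i * X (Tp A i) \<omega>" for i \<omega>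
  have TI: "Tp A i \<in> {1..t}" if "i \<in> I" for i
  proof -
    have "Tp A i \<in> A" using that pf unfolding I_def i0_def by (intro Tp_in[OF fin]) auto
    then show ?thesis using A by auto
  qed
  have injT: "inj_on (Tp A) I"
  proof (rule inj_onI)
    fix i i' assume ii: "i \<in> I" "i' \<in> I" "Tp A i = Tp A i'"
    have r: "1 \<le> i" "i \<le> card A" "1 \<le> i'" "i' \<le> card A" using ii pf unfolding I_def i0_def by auto
    show "i = i'"
    proof (rule ccontr)
      assume "i \<noteq> i'"
      then have "i < i' \<or> i' < i" by auto
      then show False using Tp_mono[OF fin r(1) _ r(4)] Tp_mono[OF fin r(3) _ r(2)] ii(3) by auto
    qed
  qed
  have indI: "indep_vars (\<lambda>_. borel) Y I"
  proof -
    have "indep_vars (\<lambda>_. borel) X (Tp A ` I)" using TI by (intro indep_vars_subset[OF indX]) auto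
    from indep_vars_reindex[OF this injT]
    have "indep_vars (\<lambda>_. borel) (\<lambda>i. X (Tp A i)) I" by simp
    from indep_vars_compose2[OF this, of "\<lambda>i x. W i * x" "\<lambda>_. borel"]
    show ?thesis unfolding Y_def by simp
  qed
  have Wnn: "0 \<le> W i" if "i \<in> I" for i
    unfolding W_def using that pf params unfolding I_def i0_def by (intro Wt_nonneg) auto
  have AEI: "AE x in M. Y i x \<in> {0..W i}" if i: "i \<in> I" for i
  proof (rule AE_I2)
    fix x assume x: "x \<in> space M"
    have "0 \<le> X (Tp A i) x" "X (Tp A i) x \<le> 1" using X01 TI[OF i] x by auto
    then show "Y i x \<in> {0..W i}" unfolding Y_def using Wnn[OF i]
      by (auto simp: mult_left_le)
  qed
  interpret HI: indep_interval_bounded_random_variables M I Y "\<lambda>_. 0" W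
  proof unfold_locales
    show "finite I" by (simp add: I_def)
    show "indep_vars (\<lambda>_. borel) Y I" by (rule indI)
    fix i assume "i \<in> I"
    then show "AE x in M. Y i x \<in> {0..W i}" by (rule AEI)
  qed
  define \<mu> where "\<mu> = (\<Sum>i\<in>I. expectation (Y i))"
  interpret H: Hoeffding_ineq M I Y "\<lambda>_. 0" W \<mu>
    by unfold_locales (simp add: \<mu>_def)
  have \<mu>eq: "\<mu> = (\<Sum>i\<in>I. W i * m k)"
    unfolding \<mu>_def Y_def
  proof (intro sum.cong refl)
    fix i assume i: "i \<in> I"
    have "expectation (X (Tp A i)) = m k" using mean pf i unfolding I_def i0_def by auto
    then show "expectation (\<lambda>\<omega>. W i * X (Tp A i) \<omega>) = W i * m k" by simp
  qed
  define D where "D = (\<Sum>i\<in>I. (W i - 0)\<^sup>2)"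
  define Wb where "Wb = (Lt / 2) powr (-\<delta>)"
  have lI: "l \<in> I" using pf unfolding I_def i0_def by auto
  have Wl: "0 < W l" unfolding W_def Wt_same alpha_def using pf by simp
  have Dpos: "0 < D"
  proof -
    have "(W l - 0)\<^sup>2 \<le> D" unfolding D_def using lI by (intro member_le_sum) (auto simp: I_def)
    moreover have "0 < (W l - 0)\<^sup>2" using Wl by simp
    ultimately show ?thesis by linarith
  qed
  have Wle: "W i \<le> Wb" if i: "i \<in> I" for i
  proof -
    have "W i \<le> max (exp (- (Lt/2) * wt powr (-\<delta>))) ((Lt/2) powr (-\<delta>))"
      unfolding W_def
      using pf G i Lt_pos params unfolding I_def i0_def Gd_def
      by (intro Wt_max[where w="card A"]) auto
    then show ?thesis using N2 unfolding Wb_def by simp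
  qed
  have DWb: "D \<le> Wb"
  proof -
    have "D \<le> (\<Sum>i\<in>I. Wb * W i)" unfolding D_def
    proof (intro sum_mono)
      fix i assume i: "i \<in> I"
      show "(W i - 0)\<^sup>2 \<le> Wb * W i" using Wle[OF i] Wnn[OF i]
        by (simp add: power2_eq_square mult_right_mono)
    qed
    also have "\<dots> = Wb * (\<Sum>i\<in>I. W i)" by (simp add: sum_distrib_left)
    also have "(\<Sum>i\<in>I. W i) \<le> 1"
    proof -
      have "(\<Sum>i\<in>I. W i) = 1 - (\<Prod>r\<in>{i0..l}. alpha \<delta> r)"
        unfolding W_def I_def using pf unfolding i0_def by (intro Wsum) auto
      moreover have "0 \<le> (\<Prod>r\<in>{i0..l}. alpha \<delta> r)"
        using params pf unfolding i0_def by (intro prod_alpha_le1) auto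
      ultimately show ?thesis by simp
    qed
    then have "Wb * (\<Sum>i\<in>I. W i) \<le> Wb * 1"
      unfolding Wb_def by (intro mult_left_mono) auto
    finally show ?thesis by simp
  qed
  have sub: "{\<omega>\<in>space M. \<not> Hg A k l (Xv \<omega>)} = {x\<in>space M. eps \<le> \<bar>(\<Sum>i\<in>I. Y i x) - \<mu>\<bar>}"
  proof -
    have "(\<Sum>i\<in>I. Wt \<delta> l i * Xv \<omega> (Tp A i)) = (\<Sum>i\<in>I. Y i \<omega>)" for \<omega>
      unfolding Y_def W_def Xv_def using TI by (intro sum.cong) auto
    then show ?thesis unfolding Hg_def \<mu>eq W_def I_def i0_def by auto
  qed
  have "prob {\<omega>\<in>space M. \<not> Hg A k l (Xv \<omega>)} \<le> 2 * exp (-2 * eps\<^sup>2 / D)"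
    unfolding sub D_def using Dpos params unfolding D_def
    by (intro H.Hoeffding_ineq_abs_ge) auto
  also have "\<dots> \<le> 2 * exp (-2 * eps\<^sup>2 / Wb)"
  proof -
    have "2 * eps\<^sup>2 / Wb \<le> 2 * eps\<^sup>2 / D"
      using Dpos DWb by (intro divide_left_mono) auto
    then show ?thesis by simp
  qed
  finally show ?thesis unfolding Wb_def .
qed

end


lemma arr_local: "(\<forall>j\<in>{1..t}. z j = z' j) \<Longrightarrow> arrival_set t z = arrival_set t z'"
  by (auto simp: arrival_set_def)

lemma arr_eq_iff: "A \<subseteq> {1..t} \<Longrightarrow> arrival_set t g = A \<longleftrightarrow> (\<forall>j\<in>{1..t}. (g j = 1) = (j \<in> A))"
  by (auto simp: arrival_set_def)

lemma E_good_local: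
  assumes "\<forall>j\<in>{1..t}. x j = x' j" "\<forall>j\<in>{1..t}. z j = z' j"
  shows "E_good \<beta> \<gamma> \<delta> b t MM s m x z = E_good \<beta> \<gamma> \<delta> b t MM s m x' z'"
proof -
  have a: "arrival_set t z = arrival_set t z'" using arr_local assms(2) by blast
  define A where "A = arrival_set t z'"
  have fin: "finite A" unfolding A_def by (rule arrival_set_finite)
  have Y: "Yrec \<delta> (\<lambda>i. x (Tp A i)) l = Yrec \<delta> (\<lambda>i. x' (Tp A i)) l" if "l \<le> card A" for l
    unfolding Yrec_sum
  proof (intro sum.cong refl)
    fix i assume "i \<in> {1..l}"
    then have "Tp A i \<in> A" using that by (intro Tp_in[OF fin]) auto
    then have "Tp A i \<in> {1..t}" using arrival_set_sub unfolding A_def by blast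
    then show "Wt \<delta> l i * x (Tp A i) = Wt \<delta> l i * x' (Tp A i)" using assms by simp
  qed
  show ?thesis unfolding E_good_def a arrival_time_Tp A_def[symmetric] using Y by auto
qed

context setting2
begin

definition EgA :: "nat set \<Rightarrow> (nat \<Rightarrow> real) \<Rightarrow> bool" where
  "EgA A x \<longleftrightarrow> real (card A) \<le> 4 * real t powr (1 - \<beta>) / (1 - \<beta>) \<and>
     (\<forall>k\<in>{1..MM-1}. \<forall>l\<in>{1..card A}.
        real (s k) + real t powr \<gamma> \<le> real (Tp A l) \<and> Tp A l < s (Suc k)
        \<longrightarrow> \<bar>(\<Sum>i\<in>{1..l}. Wt \<delta> l i * x (Tp A i)) - m k\<bar> \<le> m k / real t powr b)"

lemma E_good_EgA: "E_good \<beta> \<gamma> \<delta> b t MM s m x z \<longleftrightarrow> EgA (arrival_set t z) x"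
  unfolding E_good_def EgA_def arrival_time_Tp Yrec_sum by simp

lemma Xv_space: "Xv \<omega> \<in> space (PiM {1..t} (\<lambda>_. borel))"
  unfolding Xv_def space_PiM by auto

lemma Zv_space: "Zv \<omega> \<in> space (PiM {1..t} (\<lambda>_. borel))"
  unfolding Zv_def space_PiM by auto

lemma Egood_meas: "{\<omega>\<in>space M. E_good \<beta> \<gamma> \<delta> b t MM s m (Xv \<omega>) (Zv \<omega>)} \<in> events"
proof -
  have "{\<omega>\<in>space M. E_good \<beta> \<gamma> \<delta> b t MM s m (Xv \<omega>) (Zv \<omega>)}
      = {\<omega>\<in>space M. \<exists>A\<in>Pow {1..t}. (\<forall>j\<in>{1..t}. (Zv \<omega> j = 1) = (j \<in> A)) \<and> EgA A (Xv \<omega>)}"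
  proof -
    have "E_good \<beta> \<gamma> \<delta> b t MM s m (Xv \<omega>) (Zv \<omega>) \<longleftrightarrow>
          (\<exists>A\<in>Pow {1..t}. (\<forall>j\<in>{1..t}. (Zv \<omega> j = 1) = (j \<in> A)) \<and> EgA A (Xv \<omega>))" for \<omega>
      unfolding E_good_EgA using arr_eq_iff[of _ t "Zv \<omega>"] arrival_set_sub[of t "Zv \<omega>"] by blast
    then show ?thesis by simp
  qed
  also have "\<dots> \<in> events" unfolding EgA_def by measurable
  finally show ?thesis .
qed

lemma HA_alt: "HA A f \<longleftrightarrow> (\<forall>k\<in>{1..MM-1}. \<forall>l\<in>{1..card A}.
     real (s k) + real t powr \<gamma> \<le> real (Tp A l) \<and> Tp A l < s (Suc k) \<longrightarrow> Hg A k l f)"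
  unfolding HA_def Pairs_def by auto

lemma HA_meas: "{f\<in>space (PiM {1..t} (\<lambda>_. borel)). \<not> HA A f} \<in> sets (PiM {1..t} (\<lambda>_. borel))"
  unfolding HA_alt Hg_def by measurable

lemma arrA_meas: "{g\<in>space (PiM {1..t} (\<lambda>_. borel)). arrival_set t g = A} \<in> sets (PiM {1..t} (\<lambda>_. borel))"
proof (cases "A \<subseteq> {1..t}")
  case True
  then show ?thesis unfolding arr_eq_iff[OF True] by measurable
next
  case False
  then have e: "{g\<in>space (PiM {1..t} (\<lambda>_. borel)). arrival_set t g = A} = {}"
    using arrival_set_sub by blast
  show ?thesis unfolding e by (rule sets.empty_sets)
qed

lemma Pairs_sub:
  assumes A: "A \<subseteq> {1..t}" and G: "Gd \<beta> \<gamma> t A"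
  shows "Pairs A \<subseteq> {1..t} \<times> {1..t}"
proof
  fix p assume p: "p \<in> Pairs A"
  obtain k l where kl: "p = (k, l)" by (cases p)
  note pf = pair_facts[OF A G p[unfolded kl]]
  show "p \<in> {1..t} \<times> {1..t}" using pf unfolding kl by auto
qed

lemma HA_bound:
  assumes A: "A \<subseteq> {1..t}" and G: "Gd \<beta> \<gamma> t A"
  shows "prob {\<omega>\<in>space M. \<not> HA A (Xv \<omega>)} \<le> real t ^ 2 * (2 * exp (-2 * eps\<^sup>2 / (Lt / 2) powr (-\<delta>)))"
proof -
  have fP: "finite (Pairs A)" using Pairs_sub[OF A G] finite_subset by blast
  have eq: "{\<omega>\<in>space M. \<not> HA A (Xv \<omega>)} = (\<Union>p\<in>Pairs A. {\<omega>\<in>space M. \<not> Hg A (fst p) (snd p) (Xv \<omega>)})"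
    unfolding HA_def by auto
  have ms: "{\<omega>\<in>space M. \<not> Hg A (fst p) (snd p) (Xv \<omega>)} \<in> events" for p
    unfolding Hg_def by measurable
  have "prob {\<omega>\<in>space M. \<not> HA A (Xv \<omega>)} \<le> (\<Sum>p\<in>Pairs A. prob {\<omega>\<in>space M. \<not> Hg A (fst p) (snd p) (Xv \<omega>)})"
    unfolding eq using fP ms by (intro finite_measure_subadditive_finite) auto
  also have "\<dots> \<le> (\<Sum>p\<in>Pairs A. 2 * exp (-2 * eps\<^sup>2 / (Lt / 2) powr (-\<delta>)))"
    using hoeff_pair[OF A G] by (intro sum_mono) auto
  also have "\<dots> = real (card (Pairs A)) * (2 * exp (-2 * eps\<^sup>2 / (Lt / 2) powr (-\<delta>)))" by simp
  also have "\<dots> \<le> real t ^ 2 * (2 * exp (-2 * eps\<^sup>2 / (Lt / 2) powr (-\<delta>)))"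
  proof -
    have "card (Pairs A) \<le> card ({1..t} \<times> {1..t})" using Pairs_sub[OF A G] by (intro card_mono) auto
    then have "real (card (Pairs A)) \<le> real (t * t)" by (intro of_nat_mono) simp
    then have "real (card (Pairs A)) \<le> real t ^ 2" by (simp add: power2_eq_square)
    then show ?thesis by (intro mult_right_mono) auto
  qed
  finally show ?thesis .
qed

lemma good_implies:
  assumes w: "\<omega> \<in> space M" and G: "Gd \<beta> \<gamma> t (arrival_set t (Zv \<omega>))" and H: "HA (arrival_set t (Zv \<omega>)) (Xv \<omega>)"
  shows "E_good \<beta> \<gamma> \<delta> b t MM s m (Xv \<omega>) (Zv \<omega>)"
proof -
  define A where "A = arrival_set t (Zv \<omega>)"
  have A: "A \<subseteq> {1..t}" unfolding A_def by (rule arrival_set_sub)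
  have x01: "\<forall>j\<in>{1..t}. 0 \<le> Xv \<omega> j \<and> Xv \<omega> j \<le> 1" using X01 w unfolding Xv_def by auto
  show ?thesis unfolding E_good_def arrival_time_Tp A_def[symmetric]
  proof (intro conjI ballI impI)
    show "real (card A) \<le> 4 * real t powr (1 - \<beta>) / (1 - \<beta>)"
      using G unfolding A_def[symmetric] Gd_def wbar_def by simp
    fix k l assume k: "k \<in> {1..MM-1}" and l: "l \<in> {1..card A}"
      and c: "real (s k) + real t powr \<gamma> \<le> real (Tp A l) \<and> Tp A l < s (Suc k)"
    then have p: "(k,l) \<in> Pairs A" unfolding Pairs_def by auto
    have "Hg A k l (Xv \<omega>)" using H p unfolding A_def[symmetric] HA_def by auto
    then show "\<bar>Yrec \<delta> (\<lambda>i. Xv \<omega> (Tp A i)) l - m k\<bar> \<le> m k / real t powr b"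
      using det_pair[OF A _ p x01] G unfolding A_def by simp
  qed
qed

end


context setting2
begin

lemma main_prob:
  "prob {\<omega>\<in>space M. E_good \<beta> \<gamma> \<delta> b t MM s m (\<lambda>j. X j \<omega>) (\<lambda>j. Z j \<omega>)}
     \<ge> 1 - (exp (- wt / 2) + real t * exp (- (real t powr (\<gamma> - \<beta>) / 4))
            + real t ^ 2 * (2 * exp (-2 * eps\<^sup>2 / (Lt / 2) powr (-\<delta>))))"
proof -
  define q where "q = real t ^ 2 * (2 * exp (-2 * eps\<^sup>2 / (Lt / 2) powr (-\<delta>)))"
  have q0: "0 \<le> q" unfolding q_def by simp
  define Eg where "Eg = {\<omega>\<in>space M. E_good \<beta> \<gamma> \<delta> b t MM s m (Xv \<omega>) (Zv \<omega>)}"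
  have Egeq: "{\<omega>\<in>space M. E_good \<beta> \<gamma> \<delta> b t MM s m (\<lambda>j. X j \<omega>) (\<lambda>j. Z j \<omega>)} = Eg"
    unfolding Eg_def by (intro Collect_cong conj_cong refl E_good_local) (auto simp: Xv_def Zv_def)
  have Egm: "Eg \<in> events" unfolding Eg_def by (rule Egood_meas)
  define G where "G = {A\<in>Pow {1..t}. Gd \<beta> \<gamma> t A}"
  have finG: "finite G" unfolding G_def by simp
  define Bx where "Bx A = {f\<in>space (PiM {1..t} (\<lambda>_. borel)). \<not> HA A f}" for A
  define Bz where "Bz A = {g\<in>space (PiM {1..t} (\<lambda>_. borel)). arrival_set t g = A}" for A
  define B1 where "B1 = {\<omega>\<in>space M. \<not> Gd \<beta> \<gamma> t (arrival_set t (Zv \<omega>))}"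
  define C where "C A = {\<omega>\<in>space M. Xv \<omega> \<in> Bx A \<and> Zv \<omega> \<in> Bz A}" for A
  have B1m: "B1 \<in> events"
  proof -
    have "B1 = {\<omega>\<in>space M. \<exists>A\<in>Pow {1..t}. (\<forall>j\<in>{1..t}. (Zv \<omega> j = 1) = (j \<in> A)) \<and> \<not> Gd \<beta> \<gamma> t A}"
    proof -
      have "\<not> Gd \<beta> \<gamma> t (arrival_set t (Zv \<omega>)) \<longleftrightarrow>
          (\<exists>A\<in>Pow {1..t}. (\<forall>j\<in>{1..t}. (Zv \<omega> j = 1) = (j \<in> A)) \<and> \<not> Gd \<beta> \<gamma> t A)" for \<omega>
        using arr_eq_iff[of _ t "Zv \<omega>"] arrival_set_sub[of t "Zv \<omega>"] by blast
      then show ?thesis unfolding B1_def by simp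
    qed
    also have "\<dots> \<in> events" by measurable
    finally show ?thesis .
  qed
  have Xvm: "{\<omega>\<in>space M. Xv \<omega> \<in> B} \<in> events" if "B \<in> sets (PiM {1..t} (\<lambda>_. borel))" for B
  proof -
    have "Xv -` B \<inter> space M \<in> events" using measurable_sets[OF Xv_meas that] .
    moreover have "Xv -` B \<inter> space M = {\<omega>\<in>space M. Xv \<omega> \<in> B}" by auto
    ultimately show ?thesis by simp
  qed
  have Zvm: "{\<omega>\<in>space M. Zv \<omega> \<in> B} \<in> events" if "B \<in> sets (PiM {1..t} (\<lambda>_. borel))" for B
  proof -
    have "Zv -` B \<inter> space M \<in> events" using measurable_sets[OF Zv_meas that] .
    moreover have "Zv -` B \<inter> space M = {\<omega>\<in>space M. Zv \<omega> \<in> B}" by auto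
    ultimately show ?thesis by simp
  qed
  have Bxm: "Bx A \<in> sets (PiM {1..t} (\<lambda>_. borel))" for A unfolding Bx_def by (rule HA_meas)
  have Bzm: "Bz A \<in> sets (PiM {1..t} (\<lambda>_. borel))" for A unfolding Bz_def by (rule arrA_meas)
  have Cm: "C A \<in> events" for A
  proof -
    have "C A = {\<omega>\<in>space M. Xv \<omega> \<in> Bx A} \<inter> {\<omega>\<in>space M. Zv \<omega> \<in> Bz A}" unfolding C_def by auto
    then show ?thesis using Xvm[OF Bxm] Zvm[OF Bzm] by simp
  qed
  have sub: "space M - Eg \<subseteq> B1 \<union> (\<Union>A\<in>G. C A)"
  proof
    fix \<omega> assume w: "\<omega> \<in> space M - Eg"
    show "\<omega> \<in> B1 \<union> (\<Union>A\<in>G. C A)"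
    proof (cases "Gd \<beta> \<gamma> t (arrival_set t (Zv \<omega>))")
      case False
      then show ?thesis using w unfolding B1_def by auto
    next
      case True
      define A where "A = arrival_set t (Zv \<omega>)"
      have AG: "A \<in> G" using True arrival_set_sub unfolding G_def A_def by auto
      have "\<not> HA A (Xv \<omega>)" using good_implies[of \<omega>] True w unfolding Eg_def A_def by auto
      then have "\<omega> \<in> C A" using w Xv_space Zv_space unfolding C_def Bx_def Bz_def A_def by auto
      then show ?thesis using AG by auto
    qed
  qed
  have "prob (space M - Eg) \<le> prob (B1 \<union> (\<Union>A\<in>G. C A))"
    using sub B1m Cm finG by (intro finite_measure_mono) auto
  also have "\<dots> \<le> prob B1 + prob (\<Union>A\<in>G. C A)"
    using B1m Cm finG by (intro measure_Un_le) auto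
  also have "prob (\<Union>A\<in>G. C A) \<le> (\<Sum>A\<in>G. prob (C A))"
    using Cm finG by (intro finite_measure_subadditive_finite) auto
  also have "(\<Sum>A\<in>G. prob (C A)) \<le> (\<Sum>A\<in>G. q * prob {\<omega>\<in>space M. Zv \<omega> \<in> Bz A})"
  proof (rule sum_mono)
    fix A assume A: "A \<in> G"
    have "prob (C A) = prob {\<omega>\<in>space M. Xv \<omega> \<in> Bx A} * prob {\<omega>\<in>space M. Zv \<omega> \<in> Bz A}"
      unfolding C_def by (rule factor[OF Bxm Bzm])
    also have "prob {\<omega>\<in>space M. Xv \<omega> \<in> Bx A} = prob {\<omega>\<in>space M. \<not> HA A (Xv \<omega>)}"
      unfolding Bx_def using Xv_space by simp
    also have "prob {\<omega>\<in>space M. \<not> HA A (Xv \<omega>)} \<le> q"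
      unfolding q_def using A unfolding G_def by (intro HA_bound) auto
    finally show "prob (C A) \<le> q * prob {\<omega>\<in>space M. Zv \<omega> \<in> Bz A}"
      by (simp add: mult_right_mono)
  qed
  also have "\<dots> = q * (\<Sum>A\<in>G. prob {\<omega>\<in>space M. Zv \<omega> \<in> Bz A})" by (simp add: sum_distrib_left)
  also have "(\<Sum>A\<in>G. prob {\<omega>\<in>space M. Zv \<omega> \<in> Bz A}) = prob (\<Union>A\<in>G. {\<omega>\<in>space M. Zv \<omega> \<in> Bz A})"
    using finG Zvm[OF Bzm]
    by (intro finite_measure_finite_Union[symmetric]) (auto simp: disjoint_family_on_def Bz_def)
  also have "q * prob (\<Union>A\<in>G. {\<omega>\<in>space M. Zv \<omega> \<in> Bz A}) \<le> q * 1"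
    using q0 by (intro mult_left_mono) auto
  also have "prob B1 \<le> exp (- wt / 2) + real t * exp (- (real t powr (\<gamma> - \<beta>) / 4))"
    unfolding B1_def using params Z01 Zp by (intro probZ_bad) auto
  finally have "prob (space M - Eg) \<le> exp (- wt / 2) + real t * exp (- (real t powr (\<gamma> - \<beta>) / 4)) + q"
    by simp
  moreover have "prob (space M - Eg) = 1 - prob Eg" using Egm by (rule prob_compl)
  ultimately show ?thesis unfolding Egeq q_def by simp
qed

end


lemma ev_a:
  fixes c e K b :: real
  assumes "0 < c" "0 < e" "0 < K" "0 < b"
  shows "eventually (\<lambda>t::real. exp (- (c * t powr e)) \<le> K * t powr (-b)) at_top"
  using assms by real_asymp

lemma ev_c1:
  fixes c1 p b :: real
  assumes "0 < c1" "b < p" "0 < b"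
  shows "eventually (\<lambda>t::real. exp (- (c1 * t powr p)) \<le> exp (- (t powr b)) / 3) at_top"
  using assms by real_asymp

lemma ev_c2:
  fixes g b :: real
  assumes "b < g" "0 < b"
  shows "eventually (\<lambda>t::real. t * exp (- (t powr g / 4)) \<le> exp (- (t powr b)) / 3) at_top"
  using assms by real_asymp

lemma ev_c3:
  fixes c2 b :: real
  assumes "0 < c2" "0 < b"
  shows "eventually (\<lambda>t::real. t^2 * (2 * exp (- (c2 * t powr (2*b)))) \<le> exp (- (t powr b)) / 3) at_top"
  using assms by real_asymp

lemma asym_real:
  fixes \<beta> \<gamma> \<delta> \<mu>0 :: real
  assumes p: "0 < \<beta>" "\<beta> < \<gamma>" "\<gamma> < 1" "0 < \<delta>" "\<delta> * (1 - \<beta>) < \<gamma> - \<beta>" "0 < \<mu>0"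
  defines "b \<equiv> \<delta> * (\<gamma> - \<beta>) / 4"
  shows "eventually (\<lambda>t::real.
     exp (- (t powr (\<gamma> - \<beta>) / 4) * (4 * t powr (1 - \<beta>) / (1 - \<beta>)) powr (-\<delta>)) \<le> \<mu>0 * t powr (-b) / 4 \<and>
     exp (- (t powr (\<gamma> - \<beta>) / 4) * (4 * t powr (1 - \<beta>) / (1 - \<beta>)) powr (-\<delta>)) \<le> t powr (-b) / 4 \<and>
     exp (- (t powr (\<gamma> - \<beta>) / 4 / 2) * (4 * t powr (1 - \<beta>) / (1 - \<beta>)) powr (-\<delta>)) \<le> (t powr (\<gamma> - \<beta>) / 4 / 2) powr (-\<delta>) \<and>
     exp (- (4 * t powr (1 - \<beta>) / (1 - \<beta>)) / 2) + t * exp (- (t powr (\<gamma> - \<beta>) / 4))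
       + t ^ 2 * (2 * exp (-2 * (\<mu>0 * t powr (-b) / 2)\<^sup>2 / (t powr (\<gamma> - \<beta>) / 4 / 2) powr (-\<delta>))) \<le> exp (- (t powr b)) \<and>
     1 \<le> t) at_top"
proof -
  define g where "g = \<gamma> - \<beta>"
  define q where "q = 1 - \<beta>"
  define K0 where "K0 = 4 / q"
  define c1 where "c1 = K0 powr (-\<delta>) / 4"
  define e1 where "e1 = g - q * \<delta>"
  have g: "0 < g" "g < q" unfolding g_def q_def using p by auto
  have q: "0 < q" "q < 1" unfolding q_def using p by auto
  have K0: "0 < K0" unfolding K0_def using q by simp
  have c1: "0 < c1" unfolding c1_def using K0 by simp
  have e1: "0 < e1" unfolding e1_def g_def q_def using p by (simp add: mult.commute)
  have d1: "\<delta> < 1"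
  proof -
    have "\<delta> * q < g" using p unfolding g_def q_def by simp
    also have "g < 1 * q" using g by simp
    finally show ?thesis using q by (simp add: mult_less_cancel_right)
  qed
  have bpos: "0 < b" unfolding b_def using p by simp
  have b4: "b * 4 = \<delta> * g" unfolding b_def g_def by simp
  have bg: "b < g" using d1 g unfolding b_def g_def[symmetric] by (simp add: field_simps)
  have bq: "b < q" using bg g by simp
  define c2 where "c2 = \<mu>0\<^sup>2 / 2 * 8 powr (-\<delta>)"
  have c2: "0 < c2" unfolding c2_def using p by simp
  have e_1: "eventually (\<lambda>t::real. exp (- (c1 * t powr e1)) \<le> \<mu>0 / 4 * t powr (-b)) at_top"
    by (rule ev_a) (use c1 e1 bpos p in auto)
  have e_2: "eventually (\<lambda>t::real. exp (- (c1 * t powr e1)) \<le> 1 / 4 * t powr (-b)) at_top"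
    by (rule ev_a) (use c1 e1 bpos p in auto)
  have e_3: "eventually (\<lambda>t::real. exp (- (c1 / 2 * t powr e1)) \<le> 8 powr \<delta> * t powr (-(\<delta> * g))) at_top"
    by (rule ev_a) (use c1 e1 g p in auto)
  have e_4: "eventually (\<lambda>t::real. exp (- (K0 / 2 * t powr q)) \<le> exp (- (t powr b)) / 3) at_top"
    by (rule ev_c1) (use K0 bq bpos in auto)
  have e_5: "eventually (\<lambda>t::real. t * exp (- (t powr g / 4)) \<le> exp (- (t powr b)) / 3) at_top"
    by (rule ev_c2[OF bg bpos])
  have e_6: "eventually (\<lambda>t::real. t^2 * (2 * exp (- (c2 * t powr (2*b)))) \<le> exp (- (t powr b)) / 3) at_top"
    by (rule ev_c3[OF c2 bpos])
  have e_7: "eventually (\<lambda>t::real. 1 \<le> t) at_top" by (rule eventually_ge_at_top)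
  have ev: "eventually (\<lambda>t::real. exp (- (c1 * t powr e1)) \<le> \<mu>0 / 4 * t powr (-b) \<and>
             exp (- (c1 * t powr e1)) \<le> 1 / 4 * t powr (-b) \<and>
             exp (- (c1 / 2 * t powr e1)) \<le> 8 powr \<delta> * t powr (-(\<delta> * g)) \<and>
             exp (- (K0 / 2 * t powr q)) \<le> exp (- (t powr b)) / 3 \<and>
             t * exp (- (t powr g / 4)) \<le> exp (- (t powr b)) / 3 \<and>
             t^2 * (2 * exp (- (c2 * t powr (2*b)))) \<le> exp (- (t powr b)) / 3 \<and> 1 \<le> t) at_top"
    using e_1 e_2 e_3 e_4 e_5 e_6 e_7 by eventually_elim blast
  show ?thesis
    using ev
  proof (rule eventually_mono)
    fix t :: real
    assume h: "exp (- (c1 * t powr e1)) \<le> \<mu>0 / 4 * t powr (-b) \<and>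
             exp (- (c1 * t powr e1)) \<le> 1 / 4 * t powr (-b) \<and>
             exp (- (c1 / 2 * t powr e1)) \<le> 8 powr \<delta> * t powr (-(\<delta> * g)) \<and>
             exp (- (K0 / 2 * t powr q)) \<le> exp (- (t powr b)) / 3 \<and>
             t * exp (- (t powr g / 4)) \<le> exp (- (t powr b)) / 3 \<and>
             t^2 * (2 * exp (- (c2 * t powr (2*b)))) \<le> exp (- (t powr b)) / 3 \<and> 1 \<le> t"
    then have t: "1 \<le> t" by simp
    have W: "(4 * t powr (1 - \<beta>) / (1 - \<beta>)) = K0 * t powr q" unfolding K0_def q_def by simp
    have Wd: "(K0 * t powr q) powr (-\<delta>) = K0 powr (-\<delta>) * t powr (- (q * \<delta>))"
      using K0 t by (simp add: powr_mult powr_powr)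
    have E1: "(t powr (\<gamma> - \<beta>) / 4) * (4 * t powr (1 - \<beta>) / (1 - \<beta>)) powr (-\<delta>) = c1 * t powr e1"
    proof -
      have ex: "e1 = g + (-(q * \<delta>))" unfolding e1_def by simp
      have te: "t powr e1 = t powr g * t powr (-(q * \<delta>))" unfolding ex by (rule powr_add)
      have gen: "\<And>x k y::real. x / 4 * (k * y) = k / 4 * (x * y)" by (simp add: algebra_simps)
      show ?thesis unfolding W Wd c1_def te g_def by (rule gen)
    qed
    have E2: "(t powr (\<gamma> - \<beta>) / 4 / 2) * (4 * t powr (1 - \<beta>) / (1 - \<beta>)) powr (-\<delta>) = c1 / 2 * t powr e1"
      using E1 by simp
    have L2: "(t powr (\<gamma> - \<beta>) / 4 / 2) powr (-\<delta>) = 8 powr \<delta> * t powr (-(\<delta> * g))"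
    proof -
      have "(t powr (\<gamma> - \<beta>) / 4 / 2) = t powr g / 8" unfolding g_def by simp
      then have "(t powr (\<gamma> - \<beta>) / 4 / 2) powr (-\<delta>) = (t powr g) powr (-\<delta>) / 8 powr (-\<delta>)"
        using t by (simp add: powr_divide)
      also have "\<dots> = (t powr g) powr (-\<delta>) * 8 powr \<delta>" by (simp add: powr_minus divide_inverse)
      also have "(t powr g) powr (-\<delta>) = t powr (-(\<delta> * g))" by (simp add: powr_powr mult.commute)
      finally show ?thesis by simp
    qed
    have E3: "2 * (\<mu>0 * t powr (-b) / 2)\<^sup>2 / (t powr (\<gamma> - \<beta>) / 4 / 2) powr (-\<delta>) = c2 * t powr (2*b)"
    proof -
      have T2: "(t powr (-b))\<^sup>2 = t powr (-(2*b))"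
      proof -
        have "(t powr (-b))\<^sup>2 = t powr (-b) * t powr (-b)" by (simp add: power2_eq_square)
        also have "\<dots> = t powr (-b + -b)" by (rule powr_add[symmetric])
        finally show ?thesis by simp
      qed
      have TP: "t powr (-(2*b)) / t powr (-(\<delta> * g)) = t powr (2*b)"
      proof -
        have "t powr (-(2*b)) / t powr (-(\<delta> * g)) = t powr (-(2*b) - (-(\<delta> * g)))" by (rule powr_diff[symmetric])
        also have "-(2*b) - (-(\<delta> * g)) = 2 * b" using b4 by linarith
        finally show ?thesis .
      qed
      have alg: "\<And>mm T E P :: real. 0 < E \<Longrightarrow> 0 < P \<Longrightarrow> 2 * (mm * T / 2)\<^sup>2 / (E * P) = mm\<^sup>2 / 2 * inverse E * (T\<^sup>2 / P)"
        by (simp add: field_simps power2_eq_square)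
      have "2 * (\<mu>0 * t powr (-b) / 2)\<^sup>2 / (8 powr \<delta> * t powr (-(\<delta> * g))) = \<mu>0\<^sup>2 / 2 * inverse (8 powr \<delta>) * ((t powr (-b))\<^sup>2 / t powr (-(\<delta> * g)))"
        using t by (intro alg) auto
      also have "\<dots> = c2 * t powr (2*b)" unfolding T2 TP c2_def by (simp add: powr_minus)
      finally show ?thesis unfolding L2 .
    qed
    show "exp (- (t powr (\<gamma> - \<beta>) / 4) * (4 * t powr (1 - \<beta>) / (1 - \<beta>)) powr (-\<delta>)) \<le> \<mu>0 * t powr (-b) / 4 \<and>
     exp (- (t powr (\<gamma> - \<beta>) / 4) * (4 * t powr (1 - \<beta>) / (1 - \<beta>)) powr (-\<delta>)) \<le> t powr (-b) / 4 \<and>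
     exp (- (t powr (\<gamma> - \<beta>) / 4 / 2) * (4 * t powr (1 - \<beta>) / (1 - \<beta>)) powr (-\<delta>)) \<le> (t powr (\<gamma> - \<beta>) / 4 / 2) powr (-\<delta>) \<and>
     exp (- (4 * t powr (1 - \<beta>) / (1 - \<beta>)) / 2) + t * exp (- (t powr (\<gamma> - \<beta>) / 4))
       + t ^ 2 * (2 * exp (-2 * (\<mu>0 * t powr (-b) / 2)\<^sup>2 / (t powr (\<gamma> - \<beta>) / 4 / 2) powr (-\<delta>))) \<le> exp (- (t powr b)) \<and>
     1 \<le> t"
    proof (intro conjI)
      show "exp (- (t powr (\<gamma> - \<beta>) / 4) * (4 * t powr (1 - \<beta>) / (1 - \<beta>)) powr (-\<delta>)) \<le> \<mu>0 * t powr (-b) / 4"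
        using h E1 by (simp add: mult_minus_left)
      show "exp (- (t powr (\<gamma> - \<beta>) / 4) * (4 * t powr (1 - \<beta>) / (1 - \<beta>)) powr (-\<delta>)) \<le> t powr (-b) / 4"
        using h E1 by (simp add: mult_minus_left)
      show "exp (- (t powr (\<gamma> - \<beta>) / 4 / 2) * (4 * t powr (1 - \<beta>) / (1 - \<beta>)) powr (-\<delta>)) \<le> (t powr (\<gamma> - \<beta>) / 4 / 2) powr (-\<delta>)"
        using h E2 L2 by (simp add: mult_minus_left)
      have a1: "exp (- (4 * t powr (1 - \<beta>) / (1 - \<beta>)) / 2) \<le> exp (- (t powr b)) / 3"
        using h W by simp
      have a2: "t * exp (- (t powr (\<gamma> - \<beta>) / 4)) \<le> exp (- (t powr b)) / 3"
        using h unfolding g_def by simp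
      have a3: "t ^ 2 * (2 * exp (-2 * (\<mu>0 * t powr (-b) / 2)\<^sup>2 / (t powr (\<gamma> - \<beta>) / 4 / 2) powr (-\<delta>))) \<le> exp (- (t powr b)) / 3"
      proof -
        have "-2 * (\<mu>0 * t powr (-b) / 2)\<^sup>2 / (t powr (\<gamma> - \<beta>) / 4 / 2) powr (-\<delta>) = - (c2 * t powr (2*b))"
          using E3 by (simp add: minus_divide_left)
        then show ?thesis using h by simp
      qed
      show "exp (- (4 * t powr (1 - \<beta>) / (1 - \<beta>)) / 2) + t * exp (- (t powr (\<gamma> - \<beta>) / 4))
       + t ^ 2 * (2 * exp (-2 * (\<mu>0 * t powr (-b) / 2)\<^sup>2 / (t powr (\<gamma> - \<beta>) / 4 / 2) powr (-\<delta>))) \<le> exp (- (t powr b))"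
        using a1 a2 a3 by linarith
      show "1 \<le> t" by (rule t)
    qed
  qed
qed


lemma ks_lemma:
  assumes "s (1::nat) = (1::nat)" "\<forall>k\<in>{1..<M}. s k < s (Suc k)"
  shows "\<forall>k\<in>{1..M-1}. k \<le> s k"
proof
  fix k assume "k \<in> {1..M-1}"
  then have "1 \<le> k" "k < M" by auto
  then show "k \<le> s k"
  proof (induction k)
    case 0
    then show ?case by simp
  next
    case (Suc k)
    show ?case
    proof (cases "k = 0")
      case True
      then show ?thesis using assms by simp
    next
      case False
      then have "k \<le> s k" using Suc by simp
      moreover have "s k < s (Suc k)" using assms(2) Suc False by auto
      ultimately show ?thesis by simp
    qed
  qed
qed

theorem theorem1:
  fixes \<gamma>\<^sub>0 \<mu>\<^sub>0 \<beta> \<gamma> \<delta> :: real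
  assumes "0 < \<gamma>\<^sub>0" "\<gamma>\<^sub>0 \<le> 1" "0 < \<mu>\<^sub>0"
    and "0 < \<beta>" "\<beta> < \<gamma>" "\<gamma> < \<gamma>\<^sub>0"
    and "0 < \<delta>" "\<delta> < (\<gamma> - \<beta>) / (1 - \<beta>)"
  shows "\<exists>b>0. \<exists>\<theta>>0. \<exists>t\<^sub>0. \<forall>t\<ge>t\<^sub>0. \<forall>(N :: 'a measure) (X :: nat \<Rightarrow> 'a \<Rightarrow> real) (Z :: nat \<Rightarrow> 'a \<Rightarrow> real)
            (M :: nat) (s :: nat \<Rightarrow> nat) (m :: nat \<Rightarrow> real).
      t \<ge> 1 \<and> prob_space N \<and>
      prob_space.indep_vars N (\<lambda>_. borel) (\<lambda>i. case i of Inl j \<Rightarrow> X j | Inr j \<Rightarrow> Z j) ({1..t} <+> {1..t}) \<and>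
      (\<forall>j \<in> {1..t}. \<forall>\<omega> \<in> space N. 0 \<le> X j \<omega> \<and> X j \<omega> \<le> 1) \<and>
      (\<forall>j \<in> {1..t}. \<forall>\<omega> \<in> space N. Z j \<omega> = 0 \<or> Z j \<omega> = 1) \<and>
      (\<forall>j \<in> {1..t}. measure N {\<omega> \<in> space N. Z j \<omega> = 1} = real j powr (- \<beta>)) \<and>
      s 1 = 1 \<and> s M = t \<and> (\<forall>k \<in> {1..<M}. s k < s (Suc k)) \<and>
      (\<forall>k \<in> {1..M-1}. \<forall>j. s k \<le> j \<and> j < s (Suc k) \<longrightarrow> (\<integral>\<omega>. X j \<omega> \<partial>N) = m k) \<and>
      (\<forall>k \<in> {1..M-1}. real (s (Suc k) - s k) \<ge> real t powr \<gamma>\<^sub>0) \<and>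
      (\<forall>k \<in> {1..M-1}. m k \<ge> \<mu>\<^sub>0)
      \<longrightarrow> measure N {\<omega> \<in> space N. E_good \<beta> \<gamma> \<delta> b t M s m (\<lambda>j. X j \<omega>) (\<lambda>j. Z j \<omega>)}
            \<ge> 1 - exp (- (real t powr \<theta>))"
proof -
  have g1: "\<gamma> < 1" using assms by linarith
  have b1: "0 < 1 - \<beta>" using assms g1 by linarith
  have dl: "\<delta> * (1 - \<beta>) < \<gamma> - \<beta>" using assms(8) b1 by (simp add: pos_less_divide_eq)
  define b where "b = \<delta> * (\<gamma> - \<beta>) / 4"
  have bpos: "0 < b" unfolding b_def using assms by simp
  define P where "P = (\<lambda>t::real.
     exp (- (t powr (\<gamma> - \<beta>) / 4) * (4 * t powr (1 - \<beta>) / (1 - \<beta>)) powr (-\<delta>)) \<le> \<mu>\<^sub>0 * t powr (-b) / 4 \<and>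
     exp (- (t powr (\<gamma> - \<beta>) / 4) * (4 * t powr (1 - \<beta>) / (1 - \<beta>)) powr (-\<delta>)) \<le> t powr (-b) / 4 \<and>
     exp (- (t powr (\<gamma> - \<beta>) / 4 / 2) * (4 * t powr (1 - \<beta>) / (1 - \<beta>)) powr (-\<delta>)) \<le> (t powr (\<gamma> - \<beta>) / 4 / 2) powr (-\<delta>) \<and>
     exp (- (4 * t powr (1 - \<beta>) / (1 - \<beta>)) / 2) + t * exp (- (t powr (\<gamma> - \<beta>) / 4))
       + t ^ 2 * (2 * exp (-2 * (\<mu>\<^sub>0 * t powr (-b) / 2)\<^sup>2 / (t powr (\<gamma> - \<beta>) / 4 / 2) powr (-\<delta>))) \<le> exp (- (t powr b)) \<and>
     1 \<le> t)"
  have evr: "eventually P at_top"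
    unfolding P_def b_def using asym_real[of \<beta> \<gamma> \<delta> \<mu>\<^sub>0] assms g1 dl by simp
  have "eventually (\<lambda>n::nat. P (real n)) sequentially"
    by (rule eventually_compose_filterlim[OF evr filterlim_real_sequentially])
  then obtain n0 where n0: "\<And>n. n \<ge> n0 \<Longrightarrow> P (real n)" unfolding eventually_sequentially by blast
  show ?thesis
  proof (intro exI[of _ b] conjI bpos exI[of _ n0] allI impI)
    fix t :: nat and N :: "'a measure" and X Z :: "nat \<Rightarrow> 'a \<Rightarrow> real" and M :: nat and s :: "nat \<Rightarrow> nat" and m :: "nat \<Rightarrow> real"
    assume tn: "n0 \<le> t"
    assume H: "t \<ge> 1 \<and> prob_space N \<and>
      prob_space.indep_vars N (\<lambda>_. borel) (\<lambda>i. case i of Inl j \<Rightarrow> X j | Inr j \<Rightarrow> Z j) ({1..t} <+> {1..t}) \<and>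
      (\<forall>j \<in> {1..t}. \<forall>\<omega> \<in> space N. 0 \<le> X j \<omega> \<and> X j \<omega> \<le> 1) \<and>
      (\<forall>j \<in> {1..t}. \<forall>\<omega> \<in> space N. Z j \<omega> = 0 \<or> Z j \<omega> = 1) \<and>
      (\<forall>j \<in> {1..t}. measure N {\<omega> \<in> space N. Z j \<omega> = 1} = real j powr (- \<beta>)) \<and>
      s 1 = 1 \<and> s M = t \<and> (\<forall>k \<in> {1..<M}. s k < s (Suc k)) \<and>
      (\<forall>k \<in> {1..M-1}. \<forall>j. s k \<le> j \<and> j < s (Suc k) \<longrightarrow> (\<integral>\<omega>. X j \<omega> \<partial>N) = m k) \<and>
      (\<forall>k \<in> {1..M-1}. real (s (Suc k) - s k) \<ge> real t powr \<gamma>\<^sub>0) \<and>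
      (\<forall>k \<in> {1..M-1}. m k \<ge> \<mu>\<^sub>0)"
    have Pt: "P (real t)" using n0 tn by blast
    have ps: "prob_space N" using H by blast
    interpret S: setting2 N X Z t \<beta> \<gamma> \<delta> \<mu>\<^sub>0 b M s m
    proof (unfold_locales)
      show "prob_space.indep_vars N (\<lambda>_. borel) (\<lambda>i. case i of Inl j \<Rightarrow> X j | Inr j \<Rightarrow> Z j) ({1..t} <+> {1..t})"
        using H by blast
      show "0 < \<beta>" "\<beta> < \<gamma>" "\<gamma> < 1" "0 < \<delta>" "0 < \<mu>\<^sub>0" "0 < b" using assms g1 bpos by auto
      show "1 \<le> t" using H by blast
      show "\<forall>j\<in>{1..t}. \<forall>\<omega>\<in>space N. 0 \<le> X j \<omega> \<and> X j \<omega> \<le> 1" using H by blast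
      show "\<forall>j\<in>{1..t}. \<forall>\<omega>\<in>space N. Z j \<omega> = 0 \<or> Z j \<omega> = 1" using H by blast
      show "\<forall>j\<in>{1..t}. measure N {\<omega>\<in>space N. Z j \<omega> = 1} = real j powr (-\<beta>)" using H by blast
      show "\<forall>k\<in>{1..M-1}. k \<le> s k" using H by (intro ks_lemma) blast+
      show "\<forall>k\<in>{1..M-1}. \<forall>j. s k \<le> j \<and> j < s (Suc k) \<longrightarrow> (\<integral>\<omega>. X j \<omega> \<partial>N) = m k" using H by blast
      show "\<forall>k\<in>{1..M-1}. \<mu>\<^sub>0 \<le> m k" using H by blast
      show "exp (- Lw \<beta> \<gamma> t * wbar \<beta> t powr (-\<delta>)) \<le> \<mu>\<^sub>0 * real t powr (-b) / 4"
        using Pt unfolding P_def Lw_def wbar_def by blast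
      show "exp (- Lw \<beta> \<gamma> t * wbar \<beta> t powr (-\<delta>)) \<le> real t powr (-b) / 4"
        using Pt unfolding P_def Lw_def wbar_def by blast
      show "exp (- (Lw \<beta> \<gamma> t / 2) * wbar \<beta> t powr (-\<delta>)) \<le> (Lw \<beta> \<gamma> t / 2) powr (-\<delta>)"
        using Pt unfolding P_def Lw_def wbar_def by blast
    qed (use ps in \<open>auto simp: prob_space_def prob_space_axioms_def finite_measure_def finite_measure_axioms_def sigma_finite_measure_def\<close>)
    have fin: "exp (- wbar \<beta> t / 2) + real t * exp (- (real t powr (\<gamma> - \<beta>) / 4))
            + real t ^ 2 * (2 * exp (-2 * (\<mu>\<^sub>0 * real t powr (-b) / 2)\<^sup>2 / (Lw \<beta> \<gamma> t / 2) powr (-\<delta>))) \<le> exp (- (real t powr b))"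
      using Pt unfolding P_def Lw_def wbar_def by blast
    show "measure N {\<omega> \<in> space N. E_good \<beta> \<gamma> \<delta> b t M s m (\<lambda>j. X j \<omega>) (\<lambda>j. Z j \<omega>)} \<ge> 1 - exp (- (real t powr b))"
      using S.main_prob fin by linarith
  qed
qed

end
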